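(* Let $\mathfrak g$ be a finite-dimensional complex simple Lie algebra and $q\in\mathbb C^\times$ not a root of unity. Suppose $\boldsymbol\varpi,\boldsymbol\varpi'\in\mathcal P_q$ satisfy $\boldsymbol\varpi'=T_w\boldsymbol\varpi$ for some $w\in W$. Then $\boldsymbol\varpi(\boldsymbol\varpi')^{-1}\in\mathcal Q_q$. Moreover, if $\boldsymbol\varpi\in\mathcal P_q^+$ then $\boldsymbol\varpi(\boldsymbol\varpi')^{-1}\in\mathcal Q_q^+$, and if $\boldsymbol\varpi\in\mathcal P_q^-$ then $\boldsymbol\varpi(\boldsymbol\varpi')^{-1}\in\mathcal Q_q^-$.
   Context: $I=\{1,\dots,n\}$, $(a_{ij})$ the Cartan matrix, $W$ the Weyl group with simple reflections $s_i$; $d_i$ positive integers with $(d_ia_{ij})$ symmetric, $q_i=q^{d_i}$. $\mathcal P_q=\mathbb A^n$, $\mathbb A$ the multiplicative group of rational functions with value 1 at $u=0$; $\boldsymbol\omega_{i,a}$ has $i$-th entry $1-au$ and others $1$; $\mathcal P_q^+$ is the monoid generated by $1$ and all $\boldsymbol\omega_{i,a}$, and $\mathcal P_q^-=\{\boldsymbol\beta^{-1}:\boldsymbol\beta\in\mathcal P_q^+\}$. Braid action: $(T_i\boldsymbol\varpi)_j=\varpi_j$ if $a_{ji}=0$; $\varpi_j(u)\varpi_i(q_iu)$ if $a_{ji}=-1$; $\varpi_j(u)\varpi_i(q^3u)\varpi_i(qu)$ if $a_{ji}=-2$; $\varpi_j(u)\varpi_i(q^5u)\varpi_i(q^3u)\varpi_i(qu)$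 if $a_{ji}=-3$; $(T_i\boldsymbol\varpi)_i=1/\varpi_i(q_i^2u)$; $T_w=T_{i_1}\cdots T_{i_k}$ for a reduced expression. $\boldsymbol\alpha_{i,a}=(T_i\boldsymbol\omega_{i,a})^{-1}\boldsymbol\omega_{i,a}$; $\mathcal Q_q$ the subgroup generated by all $\boldsymbol\alpha_{i,a}$, $\mathcal Q_q^+$ the monoid generated by $1$ and them, $\mathcal Q_q^-=\{\boldsymbol\beta^{-1}:\boldsymbol\beta\in\mathcal Q_q^+\}$. *)

theory Defs
  imports Complex_Main "HOL-Computational_Algebra.Polynomial" "HOL-Computational_Algebra.Fraction_Field"
begin

text \<open>Rational functions in u over the complex numbers are modelled as the fraction
field of complex polynomials. The group A: rational functions with value 1 at u = 0.\<close>

type_synonym ratfun = "complex poly fract"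

definition ratA :: "ratfun set" where
  "ratA = {Fract p r | p r. poly r 0 \<noteq> 0 \<and> poly p 0 = poly r 0}"

definition rscale :: "complex \<Rightarrow> ratfun \<Rightarrow> ratfun" where
  "rscale c f = (SOME g. \<exists>p r. r \<noteq> 0 \<and> f = Fract p r \<and>
      g = Fract (pcompose p [:0, c:]) (pcompose r [:0, c:]))"

text \<open>Index set I = {1..n}. Tuples are functions nat => ratfun, equal to 1 outside I.\<close>

definition tmul :: "(nat \<Rightarrow> ratfun) \<Rightarrow> (nat \<Rightarrow> ratfun) \<Rightarrow> (nat \<Rightarrow> ratfun)" where
  "tmul x y = (\<lambda>i. x i * y i)"

definition tinv :: "(nat \<Rightarrow> ratfun) \<Rightarrow> (nat \<Rightarrow> ratfun)" where
  "tinv x = (\<lambda>i. inverse (x i))"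

definition tone :: "nat \<Rightarrow> ratfun" where
  "tone = (\<lambda>i. 1)"

definition Pq :: "nat \<Rightarrow> (nat \<Rightarrow> ratfun) set" where
  "Pq n = {x. (\<forall>i\<in>{1..n}. x i \<in> ratA) \<and> (\<forall>i. i \<notin> {1..n} \<longrightarrow> x i = 1)}"

definition omega :: "nat \<Rightarrow> complex \<Rightarrow> (nat \<Rightarrow> ratfun)" where
  "omega i a = (\<lambda>j. if j = i then Fract [:1, - a:] 1 else 1)"

inductive_set Pq_plus :: "nat \<Rightarrow> (nat \<Rightarrow> ratfun) set" for n where
  one: "tone \<in> Pq_plus n"
| gen: "i \<in> {1..n} \<Longrightarrow> a \<noteq> 0 \<Longrightarrow> omega i a \<in> Pq_plus n"
| mul: "x \<in> Pq_plus n \<Longrightarrow> y \<in> Pq_plus n \<Longrightarrow> tmul x y \<in> Pq_plus n"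

definition Pq_minus :: "nat \<Rightarrow> (nat \<Rightarrow> ratfun) set" where
  "Pq_minus n = {tinv b | b. b \<in> Pq_plus n}"

text \<open>Cartan matrix (a_ij) of a finite-dimensional complex simple Lie algebra, with the
standard symmetrizer d (positive integers, d_i a_ij = d_j a_ji, normalized so that
min d_i = 1): indecomposable, symmetrizable, positive definite generalized Cartan matrix.\<close>

definition simple_cartan :: "nat \<Rightarrow> (nat \<Rightarrow> nat \<Rightarrow> int) \<Rightarrow> (nat \<Rightarrow> nat) \<Rightarrow> bool" where
  "simple_cartan n A d \<longleftrightarrow>
     n \<ge> 1 \<and>
     (\<forall>i\<in>{1..n}. A i i = 2) \<and>
     (\<forall>i\<in>{1..n}. \<forall>j\<in>{1..n}. i \<noteq> j \<longrightarrow> A i j \<le> 0) \<and>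
     (\<forall>i\<in>{1..n}. \<forall>j\<in>{1..n}. A i j = 0 \<longleftrightarrow> A j i = 0) \<and>
     (\<forall>i\<in>{1..n}. d i > 0) \<and>
     (\<exists>i\<in>{1..n}. d i = 1) \<and>
     (\<forall>i\<in>{1..n}. \<forall>j\<in>{1..n}. int (d i) * A i j = int (d j) * A j i) \<and>
     (\<forall>x :: nat \<Rightarrow> real. (\<exists>i\<in>{1..n}. x i \<noteq> 0) \<longrightarrow>
         (\<Sum>i\<in>{1..n}. \<Sum>j\<in>{1..n}. x i * real (d i) * real_of_int (A i j) * x j) > 0) \<and>
     (\<forall>J. J \<subseteq> {1..n} \<and> J \<noteq> {} \<and> J \<noteq> {1..n} \<longrightarrow>
         (\<exists>i\<in>J. \<exists>j\<in>{1..n} - J. A i j \<noteq> 0))"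

text \<open>Weyl group: simple reflections acting on the root lattice (coordinates w.r.t. the
simple roots): s_i(alpha_j) = alpha_j - a_ij alpha_i.\<close>

definition srefl :: "nat \<Rightarrow> (nat \<Rightarrow> nat \<Rightarrow> int) \<Rightarrow> nat \<Rightarrow> (nat \<Rightarrow> int) \<Rightarrow> (nat \<Rightarrow> int)" where
  "srefl n A i v = (\<lambda>k. if k = i then v k - (\<Sum>j\<in>{1..n}. A i j * v j) else v k)"

fun weyl_word :: "nat \<Rightarrow> (nat \<Rightarrow> nat \<Rightarrow> int) \<Rightarrow> nat list \<Rightarrow> (nat \<Rightarrow> int) \<Rightarrow> (nat \<Rightarrow> int)" where
  "weyl_word n A [] = id"
| "weyl_word n A (i # is) = srefl n A i \<circ> weyl_word n A is"

definition reduced_word :: "nat \<Rightarrow> (nat \<Rightarrow> nat \<Rightarrow> int) \<Rightarrow> nat list \<Rightarrow> bool" where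
  "reduced_word n A w \<longleftrightarrow> set w \<subseteq> {1..n} \<and>
     (\<forall>w'. set w' \<subseteq> {1..n} \<and> weyl_word n A w' = weyl_word n A w \<longrightarrow> length w \<le> length w')"

definition Tbraid :: "nat \<Rightarrow> (nat \<Rightarrow> nat \<Rightarrow> int) \<Rightarrow> (nat \<Rightarrow> nat) \<Rightarrow> complex \<Rightarrow> nat
                      \<Rightarrow> (nat \<Rightarrow> ratfun) \<Rightarrow> (nat \<Rightarrow> ratfun)" where
  "Tbraid n A d q i x = (\<lambda>j.
     if j \<notin> {1..n} then x j
     else if j = i then inverse (rscale (q ^ (2 * d i)) (x i))
     else if A j i = 0 then x j
     else if A j i = -1 then x j * rscale (q ^ d i) (x i)
     else if A j i = -2 then x j * rscale (q ^ 3) (x i) * rscale q (x i)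
     else if A j i = -3 then x j * rscale (q ^ 5) (x i) * rscale (q ^ 3) (x i) * rscale q (x i)
     else x j)"

fun Tword :: "nat \<Rightarrow> (nat \<Rightarrow> nat \<Rightarrow> int) \<Rightarrow> (nat \<Rightarrow> nat) \<Rightarrow> complex \<Rightarrow> nat list
                \<Rightarrow> (nat \<Rightarrow> ratfun) \<Rightarrow> (nat \<Rightarrow> ratfun)" where
  "Tword n A d q [] x = x"
| "Tword n A d q (i # is) x = Tbraid n A d q i (Tword n A d q is x)"

definition alpha :: "nat \<Rightarrow> (nat \<Rightarrow> nat \<Rightarrow> int) \<Rightarrow> (nat \<Rightarrow> nat) \<Rightarrow> complex \<Rightarrow> nat \<Rightarrow> complex
                     \<Rightarrow> (nat \<Rightarrow> ratfun)" where
  "alpha n A d q i a = tmul (tinv (Tbraid n A d q i (omega i a))) (omega i a)"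

inductive_set Qq :: "nat \<Rightarrow> (nat \<Rightarrow> nat \<Rightarrow> int) \<Rightarrow> (nat \<Rightarrow> nat) \<Rightarrow> complex \<Rightarrow> (nat \<Rightarrow> ratfun) set"
  for n A d q where
  one: "tone \<in> Qq n A d q"
| gen: "i \<in> {1..n} \<Longrightarrow> a \<noteq> 0 \<Longrightarrow> alpha n A d q i a \<in> Qq n A d q"
| mul: "x \<in> Qq n A d q \<Longrightarrow> y \<in> Qq n A d q \<Longrightarrow> tmul x y \<in> Qq n A d q"
| inv: "x \<in> Qq n A d q \<Longrightarrow> tinv x \<in> Qq n A d q"

inductive_set Qq_plus :: "nat \<Rightarrow> (nat \<Rightarrow> nat \<Rightarrow> int) \<Rightarrow> (nat \<Rightarrow> nat) \<Rightarrow> complex \<Rightarrow> (nat \<Rightarrow> ratfun) set"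
  for n A d q where
  one: "tone \<in> Qq_plus n A d q"
| gen: "i \<in> {1..n} \<Longrightarrow> a \<noteq> 0 \<Longrightarrow> alpha n A d q i a \<in> Qq_plus n A d q"
| mul: "x \<in> Qq_plus n A d q \<Longrightarrow> y \<in> Qq_plus n A d q \<Longrightarrow> tmul x y \<in> Qq_plus n A d q"

definition Qq_minus :: "nat \<Rightarrow> (nat \<Rightarrow> nat \<Rightarrow> int) \<Rightarrow> (nat \<Rightarrow> nat) \<Rightarrow> complex \<Rightarrow> (nat \<Rightarrow> ratfun) set" where
  "Qq_minus n A d q = {tinv b | b. b \<in> Qq_plus n A d q}"

end

theory Submission
  imports Defs "Jordan_Normal_Form.Determinant" "HOL-Computational_Algebra.Fundamental_Theorem_Algebra"
begin

definition ev :: "nat \<Rightarrow> nat \<Rightarrow> int" where "ev k = (\<lambda>l. if l = k then 1 else 0)"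

locale cart =
  fixes n :: nat and A :: "nat \<Rightarrow> nat \<Rightarrow> int" and d :: "nat \<Rightarrow> nat"
  assumes sc: "simple_cartan n A d"
begin

abbreviation ww where "ww \<equiv> weyl_word n A"
abbreviation sr where "sr \<equiv> srefl n A"

lemma Aii: "i \<in> {1..n} \<Longrightarrow> A i i = 2" using sc unfolding simple_cartan_def by auto
lemma Aoff: "i \<in> {1..n} \<Longrightarrow> j \<in> {1..n} \<Longrightarrow> i \<noteq> j \<Longrightarrow> A i j \<le> 0"
  using sc unfolding simple_cartan_def by auto
lemma Azero: "i \<in> {1..n} \<Longrightarrow> j \<in> {1..n} \<Longrightarrow> A i j = 0 \<longleftrightarrow> A j i = 0"
  using sc unfolding simple_cartan_def by auto
lemma dpos: "i \<in> {1..n} \<Longrightarrow> d i > 0" using sc unfolding simple_cartan_def by auto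
lemma dsym: "i \<in> {1..n} \<Longrightarrow> j \<in> {1..n} \<Longrightarrow> int (d i) * A i j = int (d j) * A j i"
  using sc unfolding simple_cartan_def by auto
lemma PD: "(\<exists>i\<in>{1..n}. x i \<noteq> 0) \<Longrightarrow>
   (\<Sum>i\<in>{1..n}. \<Sum>j\<in>{1..n}. x i * real (d i) * real_of_int (A i j) * x j) > 0"
  using sc unfolding simple_cartan_def by blast
lemma indec: "J \<subseteq> {1..n} \<Longrightarrow> J \<noteq> {} \<Longrightarrow> J \<noteq> {1..n} \<Longrightarrow> \<exists>i\<in>J. \<exists>j\<in>{1..n} - J. A i j \<noteq> 0"
  using sc unfolding simple_cartan_def by blast
lemma n_pos: "n \<ge> 1" using sc unfolding simple_cartan_def by auto

lemma sr_alt: "sr i v = (\<lambda>k. v k - (if k = i then (\<Sum>j\<in>{1..n}. A i j * v j) else 0))"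
  unfolding srefl_def by auto

lemma sr_invol: assumes i: "i \<in> {1..n}" shows "sr i (sr i v) = v"
proof -
  let ?S = "\<Sum>j\<in>{1..n}. A i j * v j"
  have "(\<Sum>j\<in>{1..n}. A i j * sr i v j) = (\<Sum>j\<in>{1..n}. A i j * v j - (if j = i then A i i * ?S else 0))"
    unfolding sr_alt by (rule sum.cong) (auto simp: algebra_simps)
  also have "\<dots> = ?S - A i i * ?S" using i by (simp add: sum_subtractf)
  also have "\<dots> = - ?S" using Aii[OF i] by simp
  finally have "(\<Sum>j\<in>{1..n}. A i j * sr i v j) = - ?S" .
  then show ?thesis unfolding sr_alt[of i "sr i v"] by (auto simp: sr_alt fun_eq_iff)
qed

lemma sr_add: "sr i (\<lambda>k. u k + v k) = (\<lambda>k. sr i u k + sr i v k)"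
  unfolding sr_alt by (auto simp: fun_eq_iff sum.distrib algebra_simps)
lemma sr_smult: "sr i (\<lambda>k. c * v k) = (\<lambda>k. c * sr i v k)"
  unfolding sr_alt by (auto simp: fun_eq_iff sum_distrib_left algebra_simps)

lemma ww_add: "ww \<rho> (\<lambda>k. u k + v k) = (\<lambda>k. ww \<rho> u k + ww \<rho> v k)"
  by (induction \<rho>) (auto simp: sr_add)
lemma ww_smult: "ww \<rho> (\<lambda>k. c * v k) = (\<lambda>k. c * ww \<rho> v k)"
  by (induction \<rho>) (auto simp: sr_smult)
lemma ww_neg: "ww \<rho> (\<lambda>k. - v k) = (\<lambda>k. - ww \<rho> v k)"
  using ww_smult[of \<rho> "-1" v] by simp
lemma ww_lin2: "ww \<rho> (\<lambda>k. a * u k + b * v k) = (\<lambda>k. a * ww \<rho> u k + b * ww \<rho> v k)"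
  by (simp add: ww_add ww_smult)

lemma ww_append: "ww (\<rho> @ \<sigma>) = ww \<rho> \<circ> ww \<sigma>"
  by (induction \<rho>) auto

lemma ww_rev_left: "set \<rho> \<subseteq> {1..n} \<Longrightarrow> ww (rev \<rho>) (ww \<rho> v) = v"
proof (induction \<rho> arbitrary: v)
  case Nil then show ?case by simp
next
  case (Cons a \<rho>)
  then show ?case by (simp add: ww_append sr_invol)
qed

lemma ww_rev_right: "set \<rho> \<subseteq> {1..n} \<Longrightarrow> ww \<rho> (ww (rev \<rho>) v) = v"
  using ww_rev_left[of "rev \<rho>"] by simp

lemma ww_inj: "set \<rho> \<subseteq> {1..n} \<Longrightarrow> ww \<rho> u = ww \<rho> v \<Longrightarrow> u = v"
  by (metis ww_rev_left)

lemma ww_cong_rev: assumes "set \<rho> \<subseteq> {1..n}" "set \<sigma> \<subseteq> {1..n}" "ww \<rho> = ww \<sigma>"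
  shows "ww (rev \<rho>) = ww (rev \<sigma>)"
proof
  fix v
  have "ww \<sigma> (ww (rev \<rho>) v) = ww \<sigma> (ww (rev \<sigma>) v)"
    using assms ww_rev_right by metis
  then show "ww (rev \<rho>) v = ww (rev \<sigma>) v" using ww_inj assms(2) by blast
qed

lemma ww_cancel: assumes "a \<in> {1..n}" "ww (a # \<rho>) = ww (a # \<sigma>)" shows "ww \<rho> = ww \<sigma>"
proof
  fix v show "ww \<rho> v = ww \<sigma> v"
    using arg_cong[OF assms(2), of "\<lambda>f. sr a (f v)"] sr_invol[OF assms(1)] by simp
qed

definition len :: "((nat \<Rightarrow> int) \<Rightarrow> (nat \<Rightarrow> int)) \<Rightarrow> nat" where
  "len x = (LEAST k. \<exists>\<rho>. set \<rho> \<subseteq> {1..n} \<and> length \<rho> = k \<and> ww \<rho> = x)"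

definition lw :: "nat list \<Rightarrow> nat" where "lw \<rho> = len (ww \<rho>)"

definition red :: "nat list \<Rightarrow> bool" where "red \<rho> \<longleftrightarrow> set \<rho> \<subseteq> {1..n} \<and> lw \<rho> = length \<rho>"

lemma lw_min: "set \<sigma> \<subseteq> {1..n} \<Longrightarrow> ww \<sigma> = ww \<rho> \<Longrightarrow> lw \<rho> \<le> length \<sigma>"
  unfolding lw_def len_def by (rule Least_le) blast

lemma lw_le: "set \<rho> \<subseteq> {1..n} \<Longrightarrow> lw \<rho> \<le> length \<rho>"
  using lw_min by blast

lemma lw_ex: assumes "set \<rho> \<subseteq> {1..n}"
  shows "\<exists>\<sigma>. set \<sigma> \<subseteq> {1..n} \<and> length \<sigma> = lw \<rho> \<and> ww \<sigma> = ww \<rho>"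
  unfolding lw_def len_def by (rule LeastI_ex) (use assms in blast)

lemma lw_cong: "ww \<rho> = ww \<sigma> \<Longrightarrow> lw \<rho> = lw \<sigma>" unfolding lw_def by simp

lemma reduced_word_iff: "reduced_word n A w \<longleftrightarrow> red w"
proof
  assume h: "reduced_word n A w"
  then have s: "set w \<subseteq> {1..n}" unfolding reduced_word_def by blast
  obtain \<sigma> where "set \<sigma> \<subseteq> {1..n}" "length \<sigma> = lw w" "ww \<sigma> = ww w" using lw_ex[OF s] by blast
  then have "length w \<le> lw w" using h unfolding reduced_word_def by metis
  then show "red w" using lw_le[OF s] s unfolding red_def by simp
next
  assume "red w"
  then show "reduced_word n A w" unfolding red_def reduced_word_def using lw_min by metis
qed

lemma lw_append: assumes "set \<rho> \<subseteq> {1..n}" "set \<sigma> \<subseteq> {1..n}"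
  shows "lw (\<rho> @ \<sigma>) \<le> lw \<rho> + lw \<sigma>"
proof -
  obtain \<rho>' where r: "set \<rho>' \<subseteq> {1..n}" "length \<rho>' = lw \<rho>" "ww \<rho>' = ww \<rho>" using lw_ex assms by blast
  obtain \<sigma>' where s: "set \<sigma>' \<subseteq> {1..n}" "length \<sigma>' = lw \<sigma>" "ww \<sigma>' = ww \<sigma>" using lw_ex assms by blast
  have "lw (\<rho> @ \<sigma>) \<le> length (\<rho>' @ \<sigma>')"
    by (rule lw_min) (use r s in \<open>auto simp: ww_append\<close>)
  then show ?thesis using r s by simp
qed

lemma lw_rev: assumes "set \<rho> \<subseteq> {1..n}" shows "lw (rev \<rho>) = lw \<rho>"
proof -
  have *: "lw (rev \<rho>) \<le> lw \<rho>" if h: "set \<rho> \<subseteq> {1..n}" for \<rho>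
  proof -
    obtain \<sigma> where s: "set \<sigma> \<subseteq> {1..n}" "length \<sigma> = lw \<rho>" "ww \<sigma> = ww \<rho>" using lw_ex[OF h] by blast
    have "ww (rev \<sigma>) = ww (rev \<rho>)" using ww_cong_rev s h by metis
    then show ?thesis using lw_min[of "rev \<sigma>" "rev \<rho>"] s by simp
  qed
  show ?thesis using *[OF assms] *[of "rev \<rho>"] assms by simp
qed

lemma red_prefix: assumes "red (\<rho> @ \<sigma>)" shows "red \<rho>"
proof -
  have s: "set \<rho> \<subseteq> {1..n}" "set \<sigma> \<subseteq> {1..n}" using assms unfolding red_def by auto
  have "length \<rho> + length \<sigma> \<le> lw \<rho> + lw \<sigma>" using lw_append[OF s] assms unfolding red_def by simp
  then show ?thesis using lw_le[OF s(1)] lw_le[OF s(2)] s unfolding red_def by simp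
qed

lemma red_suffix: assumes "red (\<rho> @ \<sigma>)" shows "red \<sigma>"
proof -
  have s: "set \<rho> \<subseteq> {1..n}" "set \<sigma> \<subseteq> {1..n}" using assms unfolding red_def by auto
  have "length \<rho> + length \<sigma> \<le> lw \<rho> + lw \<sigma>" using lw_append[OF s] assms unfolding red_def by simp
  then show ?thesis using lw_le[OF s(1)] lw_le[OF s(2)] s unfolding red_def by simp
qed

end

context cart begin

definition Mx :: "((nat \<Rightarrow> int) \<Rightarrow> (nat \<Rightarrow> int)) \<Rightarrow> int mat" where
  "Mx x = mat n n (\<lambda>(r,c). x (ev (Suc c)) (Suc r))"
definition Smat :: "nat \<Rightarrow> int mat" where
  "Smat i = mat n n (\<lambda>(r,c). (if r = c then 1 else 0) - (if Suc r = i then A i (Suc c) else 0))"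

lemma sum_shift1: "(\<Sum>k\<in>{0..<n}. f (Suc k)) = (\<Sum>j\<in>{1..n}. f j)"
proof -
  have "(\<Sum>j\<in>{1..n}. f j) = (\<Sum>j\<in>{Suc 0..<Suc n}. f j)"
    by (rule sum.cong) auto
  also have "\<dots> = (\<Sum>k\<in>{0..<n}. f (Suc k))" by (rule sum.shift_bounds_Suc_ivl)
  finally show ?thesis by simp
qed

lemma Mx_carrier: "Mx x \<in> carrier_mat n n" unfolding Mx_def by simp
lemma Smat_carrier: "Smat i \<in> carrier_mat n n" unfolding Smat_def by simp

lemma Mx_sr: assumes i: "i \<in> {1..n}" shows "Mx (sr i \<circ> x) = Smat i * Mx x"
proof (rule eq_matI)
  fix r c assume rc: "r < dim_row (Smat i * Mx x)" "c < dim_col (Smat i * Mx x)"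
  then have r: "r < n" and c: "c < n" by (auto simp: Smat_def Mx_def)
  define v where "v = x (ev (Suc c))"
  have "(Smat i * Mx x) $$ (r, c) = (\<Sum>k\<in>{0..<n}. ((if r = k then 1 else 0) - (if Suc r = i then A i (Suc k) else 0)) * v (Suc k))"
    using r c by (simp add: Smat_def Mx_def scalar_prod_def v_def)
  also have "\<dots> = (\<Sum>k\<in>{0..<n}. (if r = k then v (Suc k) else 0) - (if Suc r = i then A i (Suc k) * v (Suc k) else 0))"
    by (rule sum.cong) (auto simp: algebra_simps)
  also have "\<dots> = (\<Sum>k\<in>{0..<n}. (if r = k then v (Suc k) else 0)) - (\<Sum>k\<in>{0..<n}. (if Suc r = i then A i (Suc k) * v (Suc k) else 0))"
    by (rule sum_subtractf)
  also have "\<dots> = v (Suc r) - (if Suc r = i then (\<Sum>k\<in>{0..<n}. A i (Suc k) * v (Suc k)) else 0)"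
    using r by simp
  also have "\<dots> = v (Suc r) - (if Suc r = i then (\<Sum>j\<in>{1..n}. A i j * v j) else 0)"
    using sum_shift1[of "\<lambda>j. A i j * v j"] by simp
  also have "\<dots> = Mx (sr i \<circ> x) $$ (r, c)"
    using r c by (simp add: Mx_def sr_alt v_def)
  finally show "Mx (sr i \<circ> x) $$ (r, c) = (Smat i * Mx x) $$ (r, c)" by simp
qed (auto simp: Mx_def Smat_def)

lemma Mx_id: "Mx id = 1\<^sub>m n"
  by (rule eq_matI) (auto simp: Mx_def ev_def)

lemma det_Smat: assumes i: "i \<in> {1..n}" shows "det (Smat i) = -1"
proof -
  let ?U = "{0..<n}"
  let ?P = "{p. p permutes ?U}"
  let ?f = "\<lambda>p. signof p * (\<Prod>k = 0..<n. Smat i $$ (k, p k))"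
  have r: "i - 1 < n" "Suc (i - 1) = i" using i by auto
  have "det (Smat i) = sum ?f ?P" by (rule det_def') (rule Smat_carrier)
  also have "\<dots> = ?f id + sum ?f (?P - {id})"
    by (rule sum.remove) (auto simp: finite_permutations permutes_id)
  also have "sum ?f (?P - {id}) = 0"
  proof (rule sum.neutral, intro ballI)
    fix p assume pP: "p \<in> ?P - {id}"
    then have p: "p permutes ?U" and nid: "p \<noteq> id" by auto
    obtain k where k: "p k \<noteq> k" using nid by (auto simp: fun_eq_iff)
    have kU: "k < n" using p k by (meson atLeastLessThan_iff permutes_not_in zero_le)
    have "\<exists>k'. k' < n \<and> p k' \<noteq> k' \<and> k' \<noteq> i - 1"
    proof (cases "k = i - 1")
      case False then show ?thesis using k kU by blast
    next
      case True
      let ?k' = "p k"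
      have "p ?k' \<noteq> ?k'" using permutes_inj[OF p] k by (metis injD)
      moreover have "?k' < n" using p kU by (simp add: permutes_in_image)
      ultimately show ?thesis using True k by blast
    qed
    then obtain k' where k': "k' < n" "p k' \<noteq> k'" "k' \<noteq> i - 1" by blast
    have pk: "p k' < n" using p k' by (simp add: permutes_in_image)
    have "Smat i $$ (k', p k') = 0" using k' pk r by (auto simp: Smat_def)
    then have "(\<Prod>k = 0..<n. Smat i $$ (k, p k)) = 0"
      using k' by (intro prod_zero) auto
    then show "?f p = 0" by simp
  qed
  also have "(\<Prod>k = 0..<n. Smat i $$ (k, id k)) = (\<Prod>k = 0..<n. if k = i - 1 then -1 else 1)"
    by (rule prod.cong) (use r Aii[OF i] in \<open>auto simp: Smat_def\<close>)
  also have "\<dots> = -1" using r by (simp add: prod.If_cases)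
  finally show ?thesis by (simp add: signof_id)
qed

lemma det_ww: "set \<rho> \<subseteq> {1..n} \<Longrightarrow> det (Mx (ww \<rho>)) = (-1) ^ length \<rho>"
proof (induction \<rho>)
  case Nil
  have "Mx (\<lambda>a. a) = 1\<^sub>m n" using Mx_id by (simp add: id_def)
  then show ?case by simp
next
  case (Cons a \<rho>)
  have a: "a \<in> {1..n}" using Cons by simp
  have "det (Mx (ww (a # \<rho>))) = det (Smat a * Mx (ww \<rho>))" using Mx_sr[OF a, of "ww \<rho>"] by (simp add: comp_def)
  also have "\<dots> = det (Smat a) * det (Mx (ww \<rho>))" by (rule det_mult[OF Smat_carrier Mx_carrier])
  also have "\<dots> = (-1) ^ length (a # \<rho>)" using Cons det_Smat[OF a] by simp
  finally show ?case .
qed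

lemma parity: assumes "set \<rho> \<subseteq> {1..n}" "set \<sigma> \<subseteq> {1..n}" "ww \<rho> = ww \<sigma>"
  shows "even (length \<rho> + length \<sigma>)"
proof -
  have "(-1::int) ^ length \<rho> = (-1) ^ length \<sigma>" using det_ww assms by metis
  then have "even (length \<rho>) = even (length \<sigma>)" by (metis neg_one_even_power neg_one_odd_power one_neq_neg_one)
  then show ?thesis by auto
qed

lemma lw_Cons: assumes a: "a \<in> {1..n}" and s: "set \<rho> \<subseteq> {1..n}"
  shows "lw (a # \<rho>) = lw \<rho> + 1 \<or> lw \<rho> = lw (a # \<rho>) + 1"
proof -
  have s2: "set (a # \<rho>) \<subseteq> {1..n}" using a s by simp
  have le1: "lw (a # \<rho>) \<le> lw \<rho> + 1"
    using lw_append[of "[a]" \<rho>] lw_le[of "[a]"] a s by simp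
  have "ww (a # a # \<rho>) = ww \<rho>" using sr_invol[OF a] by (simp add: fun_eq_iff)
  then have "lw \<rho> = lw (a # (a # \<rho>))" by (metis lw_cong)
  also have "\<dots> \<le> lw (a # \<rho>) + 1"
    using lw_append[of "[a]" "a # \<rho>"] lw_le[of "[a]"] a s by simp
  finally have le2: "lw \<rho> \<le> lw (a # \<rho>) + 1" .
  obtain \<sigma> where \<sigma>: "set \<sigma> \<subseteq> {1..n}" "length \<sigma> = lw \<rho>" "ww \<sigma> = ww \<rho>" using lw_ex[OF s] by blast
  obtain \<tau> where \<tau>: "set \<tau> \<subseteq> {1..n}" "length \<tau> = lw (a # \<rho>)" "ww \<tau> = ww (a # \<rho>)" using lw_ex[OF s2] by blast
  have "ww (a # \<sigma>) = ww \<tau>" using \<sigma> \<tau> by simp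
  then have "even (length (a # \<sigma>) + length \<tau>)" using parity[of "a # \<sigma>" \<tau>] \<sigma> \<tau> a by simp
  then have "even (lw \<rho> + 1 + lw (a # \<rho>))" using \<sigma> \<tau> by simp
  moreover have "\<And>x y::nat. even (x + 1 + y) \<Longrightarrow> y \<le> x + 1 \<Longrightarrow> x \<le> y + 1 \<Longrightarrow> y = x + 1 \<or> x = y + 1"
    by presburger
  ultimately show ?thesis using le1 le2 by blast
qed

lemma lw_snoc: assumes a: "a \<in> {1..n}" and s: "set \<rho> \<subseteq> {1..n}"
  shows "lw (\<rho> @ [a]) = lw \<rho> + 1 \<or> lw \<rho> = lw (\<rho> @ [a]) + 1"
proof -
  have "lw (\<rho> @ [a]) = lw (a # rev \<rho>)" using lw_rev[of "\<rho> @ [a]"] a s by simp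
  moreover have "lw \<rho> = lw (rev \<rho>)" using lw_rev s by simp
  ultimately show ?thesis using lw_Cons[OF a, of "rev \<rho>"] s by simp
qed

end

fun alt :: "nat \<Rightarrow> nat \<Rightarrow> nat \<Rightarrow> nat list" where
  "alt a b 0 = []"
| "alt a b (Suc k) = a # alt b a k"

fun st2 :: "int \<Rightarrow> int \<Rightarrow> int \<Rightarrow> int \<Rightarrow> bool \<Rightarrow> nat \<Rightarrow> int \<times> int \<Rightarrow> int \<times> int" where
  "st2 p q Pa Pb f 0 s = s"
| "st2 p q Pa Pb True (Suc k) s = (case st2 p q Pa Pb False k s of (x, y) \<Rightarrow> (- x - p * y - Pa, y))"
| "st2 p q Pa Pb False (Suc k) s = (case st2 p q Pa Pb True k s of (x, y) \<Rightarrow> (x, - y - q * x - Pb))"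

lemma alt_length[simp]: "length (alt a b k) = k"
  by (induction k arbitrary: a b) auto

lemma alt_set: "set (alt a b k) \<subseteq> {a, b}"
  by (induction k arbitrary: a b) auto

lemma alt_snoc: "alt a b (Suc k) = alt a b k @ [if even k then a else b]"
  by (induction k arbitrary: a b) auto

lemma alt_rev: "rev (alt a b k) = (if odd k then alt a b k else alt b a k)"
proof (induction k arbitrary: a b)
  case 0 then show ?case by simp
next
  case (Suc k)
  have "rev (alt a b (Suc k)) = rev (alt b a k) @ [a]" by simp
  also have "\<dots> = (if odd k then alt b a k else alt a b k) @ [a]" using Suc by simp
  also have "\<dots> = (if odd (Suc k) then alt a b (Suc k) else alt b a (Suc k))"
  proof (cases "even k")
    case True
    have "alt a b (Suc k) = alt a b k @ [a]" using alt_snoc[of a b k] True by simp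
    then show ?thesis using True by simp
  next
    case False
    have "alt b a (Suc k) = alt b a k @ [a]" using alt_snoc[of b a k] False by simp
    then show ?thesis using False by simp
  qed
  finally show ?case .
qed

lemma alt_prefix: "p \<le> k \<Longrightarrow> \<exists>r. alt a b k = alt a b p @ r"
proof (induction p arbitrary: a b k)
  case 0 then show ?case by simp
next
  case (Suc p)
  then obtain k' where k: "k = Suc k'" by (cases k) auto
  then obtain r where "alt b a k' = alt b a p @ r" using Suc by fastforce
  then show ?case using k by simp
qed

context cart begin

lemma sum_two: assumes "a \<in> {1..n}" "b \<in> {1..n}" "a \<noteq> b" "\<And>k. k \<in> {1..n} \<Longrightarrow> k \<noteq> a \<Longrightarrow> k \<noteq> b \<Longrightarrow> f k = 0"
  shows "(\<Sum>k\<in>{1..n}. f k) = f a + f b"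
proof -
  have "(\<Sum>k\<in>{1..n}. f k) = (\<Sum>k\<in>{a,b}. f k)"
    by (rule sum.mono_neutral_right) (use assms in auto)
  then show ?thesis using assms by simp
qed

lemma prod_le3: assumes a: "a \<in> {1..n}" and b: "b \<in> {1..n}" and ab: "a \<noteq> b"
  shows "A a b * A b a \<le> 3"
proof (rule ccontr)
  assume "\<not> A a b * A b a \<le> 3"
  then have big: "A a b * A b a \<ge> 4" by simp
  then have nz: "A a b \<noteq> 0" "A b a \<noteq> 0" by auto
  have le: "A a b < 0" "A b a < 0" using Aoff[OF a b ab] Aoff[OF b a] ab nz a b by force+
  define r where "r = - real_of_int (A b a)"
  define s where "s = - real_of_int (A a b)"
  define da where "da = real (d a)"
  define db where "db = real (d b)"
  have rpos: "r > 0" and spos: "s > 0" using le by (auto simp: r_def s_def)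
  have dbpos: "db > 0" using dpos[OF b] by (simp add: db_def)
  have rel: "da * s = db * r"
    using arg_cong[OF dsym[OF a b], of real_of_int] by (simp add: da_def db_def r_def s_def)
  have rs: "r * s \<ge> 4" using big
    by (simp add: r_def s_def) (metis of_int_le_iff of_int_mult of_int_numeral mult.commute)
  define x where "x = (\<lambda>k. if k = a then 2 else if k = b then r else (0::real))"
  have "(\<Sum>i\<in>{1..n}. \<Sum>j\<in>{1..n}. x i * real (d i) * real_of_int (A i j) * x j) > 0"
    by (rule PD) (use a in \<open>auto simp: x_def\<close>)
  moreover have "(\<Sum>i\<in>{1..n}. \<Sum>j\<in>{1..n}. x i * real (d i) * real_of_int (A i j) * x j)
      = (\<Sum>i\<in>{1..n}. x i * real (d i) * real_of_int (A i a) * x a + x i * real (d i) * real_of_int (A i b) * x b)"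
    by (rule sum.cong[OF refl], rule sum_two[OF a b ab]) (auto simp: x_def)
  moreover have "\<dots> = (x a * real (d a) * real_of_int (A a a) * x a + x a * real (d a) * real_of_int (A a b) * x b)
        + (x b * real (d b) * real_of_int (A b a) * x a + x b * real (d b) * real_of_int (A b b) * x b)"
    by (rule sum_two[OF a b ab]) (auto simp: x_def)
  moreover have "\<dots> = 8 * da - 2 * s * r * da + 2 * r * r * db - 2 * r * r * db"
    using Aii[OF a] Aii[OF b] ab by (simp add: x_def da_def db_def r_def s_def algebra_simps)
  ultimately have pos: "8 * da - 2 * s * r * da > 0" by simp
  have "(8 * da - 2 * s * r * da) * s = 2 * db * r * (4 - r * s)"
    using rel by (simp add: algebra_simps) (metis mult.assoc mult.commute)
  also have "\<dots> \<le> 0" using dbpos rpos rs by (simp add: mult_nonneg_nonpos)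
  finally have "(8 * da - 2 * s * r * da) * s \<le> 0" .
  then show False using pos spos by (simp add: mult_le_0_iff)
qed

lemma pair_cases: assumes a: "a \<in> {1..n}" and b: "b \<in> {1..n}" and ab: "a \<noteq> b"
  shows "(A a b = 0 \<and> A b a = 0) \<or> (A a b = -1 \<and> A b a = -1) \<or> (A a b = -1 \<and> A b a = -2)
    \<or> (A a b = -2 \<and> A b a = -1) \<or> (A a b = -1 \<and> A b a = -3) \<or> (A a b = -3 \<and> A b a = -1)"
proof (cases "A a b = 0")
  case True then show ?thesis using Azero[OF a b] by simp
next
  case False
  then have nz: "A b a \<noteq> 0" using Azero[OF a b] by simp
  have l1: "A a b \<le> -1" using Aoff[OF a b ab] False by simp
  have l2: "A b a \<le> -1" using Aoff[OF b a] ab nz a b by force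
  have p: "A a b * A b a \<le> 3" by (rule prod_le3[OF a b ab])
  have g1: "A a b * A b a \<ge> - A a b"
  proof -
    have "(- A a b) * (- A b a) \<ge> (- A a b) * 1" using l1 l2 by (intro mult_left_mono) auto
    then show ?thesis by simp
  qed
  have g2: "A a b * A b a \<ge> - A b a"
  proof -
    have "(- A b a) * (- A a b) \<ge> (- A b a) * 1" using l1 l2 by (intro mult_left_mono) auto
    then show ?thesis by (simp add: mult.commute)
  qed
  have r1: "A a b \<in> {-3, -2, -1}" using l1 g1 p by auto
  have r2: "A b a \<in> {-3, -2, -1}" using l2 g2 p by auto
  show ?thesis using r1 r2 p by auto
qed

definition mm :: "nat \<Rightarrow> nat \<Rightarrow> nat" where
  "mm a b = (if A a b * A b a = 0 then 2 else if A a b * A b a = 1 then 3 else if A a b * A b a = 2 then 4 else 6)"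

lemma mm_sym: "mm a b = mm b a" unfolding mm_def by (simp add: mult.commute)

definition Pof :: "nat \<Rightarrow> nat \<Rightarrow> (nat \<Rightarrow> int) \<Rightarrow> int" where
  "Pof a b v = (\<Sum>j\<in>{1..n} - {a, b}. A a j * v j)"

lemma sr_gen: assumes a: "a \<in> {1..n}" and b: "b \<in> {1..n}" and ab: "a \<noteq> b"
  shows "sr a v = (\<lambda>k. if k = a then - v a - A a b * v b - Pof a b v else v k)"
proof -
  have "(\<Sum>j\<in>{1..n}. A a j * v j) = Pof a b v + (\<Sum>j\<in>{a,b}. A a j * v j)"
    unfolding Pof_def by (rule sum.subset_diff) (use a b in auto)
  also have "(\<Sum>j\<in>{a,b}. A a j * v j) = 2 * v a + A a b * v b" using ab Aii[OF a] by simp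
  finally show ?thesis unfolding srefl_def by (auto simp: fun_eq_iff)
qed

lemma Pof_cong: "(\<And>k. k \<noteq> a \<Longrightarrow> k \<noteq> b \<Longrightarrow> v k = w k) \<Longrightarrow> Pof a b v = Pof a b w"
  unfolding Pof_def by (rule sum.cong) auto

lemma ww_alt: assumes a: "a \<in> {1..n}" and b: "b \<in> {1..n}" and ab: "a \<noteq> b"
  shows "ww (if f then alt a b k else alt b a k) v = (\<lambda>l. if l = a then fst (st2 (A a b) (A b a) (Pof a b v) (Pof b a v) f k (v a, v b))
      else if l = b then snd (st2 (A a b) (A b a) (Pof a b v) (Pof b a v) f k (v a, v b)) else v l)"
proof (induction k arbitrary: f)
  case 0 then show ?case by (auto simp: fun_eq_iff)
next
  case (Suc k)
  show ?case
  proof (cases f)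
    case True
    define w where "w = ww (alt b a k) v"
    have w: "w = (\<lambda>l. if l = a then fst (st2 (A a b) (A b a) (Pof a b v) (Pof b a v) False k (v a, v b))
      else if l = b then snd (st2 (A a b) (A b a) (Pof a b v) (Pof b a v) False k (v a, v b)) else v l)"
      using Suc.IH[of False] by (simp add: w_def)
    have P: "Pof a b w = Pof a b v" by (rule Pof_cong) (simp add: w)
    have "ww (alt a b (Suc k)) v = sr a w" by (simp add: w_def)
    also have "\<dots> = (\<lambda>l. if l = a then - w a - A a b * w b - Pof a b w else w l)" by (rule sr_gen[OF a b ab])
    finally show ?thesis using True P ab
      by (auto simp: fun_eq_iff w split: prod.splits)
  next
    case False
    define w where "w = ww (alt a b k) v"
    have w: "w = (\<lambda>l. if l = a then fst (st2 (A a b) (A b a) (Pof a b v) (Pof b a v) True k (v a, v b))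
      else if l = b then snd (st2 (A a b) (A b a) (Pof a b v) (Pof b a v) True k (v a, v b)) else v l)"
      using Suc.IH[of True] by (simp add: w_def)
    have P: "Pof b a w = Pof b a v" by (rule Pof_cong) (simp add: w)
    have "ww (alt b a (Suc k)) v = sr b w" by (simp add: w_def)
    also have "\<dots> = (\<lambda>l. if l = b then - w b - A b a * w a - Pof b a w else w l)" by (rule sr_gen[OF b a ab[symmetric]])
    finally show ?thesis using False P ab
      by (auto simp: fun_eq_iff w split: prod.splits)
  qed
qed

end

lemma six_cases: "(L::nat) < 6 \<Longrightarrow> L = 0 \<or> L = 1 \<or> L = 2 \<or> L = 3 \<or> L = 4 \<or> L = 5" by auto

lemma st2_braid:
  assumes "(p = 0 \<and> q = 0) \<or> (p = -1 \<and> q = -1) \<or> (p = -1 \<and> q = -2) \<or> (p = -2 \<and> q = -1) \<or> (p = -1 \<and> q = -3) \<or> (p = -3 \<and> q = -1)"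
  shows "st2 p q Pa Pb True (if p * q = 0 then 2 else if p * q = 1 then 3 else if p * q = 2 then 4 else 6) s
       = st2 p q Pa Pb False (if p * q = 0 then 2 else if p * q = 1 then 3 else if p * q = 2 then 4 else 6) s"
proof -
  obtain x y where s: "s = (x, y)" by (cases s)
  show ?thesis using assms unfolding s
    by (elim disjE) (simp_all add: eval_nat_numeral algebra_simps)
qed

lemma st2_pos0:
  assumes "(p = 0 \<and> q = 0) \<or> (p = -1 \<and> q = -1) \<or> (p = -1 \<and> q = -2) \<or> (p = -2 \<and> q = -1) \<or> (p = -1 \<and> q = -3) \<or> (p = -3 \<and> q = -1)"
    and "L < (if p * q = 0 then 2 else if p * q = 1 then 3 else if p * q = 2 then 4 else 6)"
    and "f = even L"
  shows "fst (st2 p q 0 0 f L (1, 0)) \<ge> 0 \<and> snd (st2 p q 0 0 f L (1, 0)) \<ge> 0"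
proof -
  have L: "L = 0 \<or> L = 1 \<or> L = 2 \<or> L = 3 \<or> L = 4 \<or> L = 5" using assms(2) by (intro six_cases) (auto split: if_splits)
  then have "(L = 0 \<and> f) \<or> (L = Suc 0 \<and> \<not> f) \<or> (L = Suc (Suc 0) \<and> f) \<or> (L = Suc (Suc (Suc 0)) \<and> \<not> f)
     \<or> (L = Suc (Suc (Suc (Suc 0))) \<and> f) \<or> (L = Suc (Suc (Suc (Suc (Suc 0)))) \<and> \<not> f)" using assms(3) by auto
  then show ?thesis using assms(1,2)
    by (elim disjE conjE) simp_all
qed

lemma st2_pos:
  assumes "(p = 0 \<and> q = 0) \<or> (p = -1 \<and> q = -1) \<or> (p = -1 \<and> q = -2) \<or> (p = -2 \<and> q = -1) \<or> (p = -1 \<and> q = -3) \<or> (p = -3 \<and> q = -1)"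
    and "L < (if p * q = 0 then 2 else if p * q = 1 then 3 else if p * q = 2 then 4 else 6)"
  shows "fst (st2 p q 0 0 (even L) L (1, 0)) \<ge> 0 \<and> snd (st2 p q 0 0 (even L) L (1, 0)) \<ge> 0"
  using st2_pos0[OF assms refl] .

context cart begin

lemma pair_cases': assumes "a \<in> {1..n}" "b \<in> {1..n}" "a \<noteq> b"
  shows "(A a b = 0 \<and> A b a = 0) \<or> (A a b = -1 \<and> A b a = -1) \<or> (A a b = -1 \<and> A b a = -2) \<or> (A a b = -2 \<and> A b a = -1) \<or> (A a b = -1 \<and> A b a = -3) \<or> (A a b = -3 \<and> A b a = -1)"
  using pair_cases[OF assms] by blast

lemma braid_cl: assumes a: "a \<in> {1..n}" and b: "b \<in> {1..n}" and ab: "a \<noteq> b"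
  shows "ww (alt a b (mm a b)) = ww (alt b a (mm a b))"
proof
  fix v
  have e: "st2 (A a b) (A b a) (Pof a b v) (Pof b a v) True (mm a b) (v a, v b)
     = st2 (A a b) (A b a) (Pof a b v) (Pof b a v) False (mm a b) (v a, v b)"
    unfolding mm_def by (rule st2_braid[OF pair_cases'[OF a b ab]])
  define F where "F f = (\<lambda>l. if l = a then fst (st2 (A a b) (A b a) (Pof a b v) (Pof b a v) f (mm a b) (v a, v b))
      else if l = b then snd (st2 (A a b) (A b a) (Pof a b v) (Pof b a v) f (mm a b) (v a, v b)) else v l)" for f
  have 1: "ww (alt a b (mm a b)) v = F True" using ww_alt[OF a b ab, of True "mm a b" v] unfolding F_def by simp
  have 2: "ww (alt b a (mm a b)) v = F False" using ww_alt[OF a b ab, of False "mm a b" v] unfolding F_def by simp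
  show "ww (alt a b (mm a b)) v = ww (alt b a (mm a b)) v" unfolding 1 2 F_def e ..
qed

lemma Pof_ev: "a \<in> {c, e} \<Longrightarrow> Pof c e (ev a) = 0"
  unfolding Pof_def ev_def by (rule sum.neutral) auto

lemma R2: assumes a: "a \<in> {1..n}" and b: "b \<in> {1..n}" and ab: "a \<noteq> b" and L: "L < mm a b"
  shows "\<exists>c c'. c \<ge> 0 \<and> c' \<ge> 0 \<and> ww (rev (alt b a L)) (ev a) = (\<lambda>k. c * ev a k + c' * ev b k)"
proof -
  have r: "rev (alt b a L) = (if even L then alt a b L else alt b a L)" by (simp add: alt_rev)
  have P1: "Pof a b (ev a) = 0" "Pof b a (ev a) = 0" using Pof_ev by auto
  have pos: "fst (st2 (A a b) (A b a) 0 0 (even L) L (1, 0)) \<ge> 0 \<and> snd (st2 (A a b) (A b a) 0 0 (even L) L (1, 0)) \<ge> 0"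
    by (rule st2_pos[OF pair_cases'[OF a b ab]]) (use L in \<open>simp add: mm_def\<close>)
  have e1: "ev a a = 1" "ev a b = 0" using ab by (auto simp: ev_def)
  have "ww (rev (alt b a L)) (ev a) = (\<lambda>l. if l = a then fst (st2 (A a b) (A b a) (Pof a b (ev a)) (Pof b a (ev a)) (even L) L (ev a a, ev a b))
      else if l = b then snd (st2 (A a b) (A b a) (Pof a b (ev a)) (Pof b a (ev a)) (even L) L (ev a a, ev a b)) else ev a l)"
    using ww_alt[OF a b ab, of "even L" L "ev a"] unfolding r by simp
  also have "\<dots> = (\<lambda>l. if l = a then fst (st2 (A a b) (A b a) 0 0 (even L) L (1, 0))
      else if l = b then snd (st2 (A a b) (A b a) 0 0 (even L) L (1, 0)) else ev a l)"
    by (simp only: P1 e1)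
  also have "\<dots> = (\<lambda>k. fst (st2 (A a b) (A b a) 0 0 (even L) L (1, 0)) * ev a k + snd (st2 (A a b) (A b a) 0 0 (even L) L (1, 0)) * ev b k)"
    using ab by (auto simp: fun_eq_iff ev_def)
  finally show ?thesis using pos by blast
qed

end

definition pos :: "(nat \<Rightarrow> int) \<Rightarrow> bool" where
  "pos v \<longleftrightarrow> (\<forall>k. 0 \<le> v k) \<and> (\<exists>k. v k \<noteq> 0)"

context cart begin

lemma ww_dup: "x \<in> {1..n} \<Longrightarrow> ww (x # x # \<sigma>) = ww \<sigma>"
  using sr_invol by (auto simp: fun_eq_iff)

lemma red_dup: assumes "red (x # x # \<sigma>)" shows False
proof -
  have x: "x \<in> {1..n}" and s: "set \<sigma> \<subseteq> {1..n}" using assms unfolding red_def by auto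
  have "lw (x # x # \<sigma>) = lw \<sigma>" using ww_dup[OF x] by (metis lw_cong)
  then show False using assms lw_le[OF s] unfolding red_def by simp
qed

lemma alt_of_red: assumes "set \<mu> \<subseteq> {a, b}" "a \<noteq> b" "red \<mu>"
  shows "\<mu> = alt a b (length \<mu>) \<or> \<mu> = alt b a (length \<mu>)"
  using assms
proof (induction \<mu>)
  case Nil then show ?case by simp
next
  case (Cons x \<mu>)
  have r: "red \<mu>" using red_suffix[of "[x]" \<mu>] Cons.prems by simp
  have IH: "\<mu> = alt a b (length \<mu>) \<or> \<mu> = alt b a (length \<mu>)" using Cons r by simp
  show ?case
  proof (cases \<mu>)
    case Nil then show ?thesis using Cons.prems by auto
  next
    case (Cons y \<mu>')
    have xy: "x \<noteq> y" using red_dup[of x \<mu>'] Cons.prems \<open>\<mu> = y # \<mu>'\<close> by auto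
    have "x = a \<or> x = b" using Cons.prems by auto
    then show ?thesis
    proof
      assume xa: "x = a"
      have "\<mu> = alt b a (length \<mu>)" using IH xy xa \<open>\<mu> = y # \<mu>'\<close> by (auto simp: alt.simps)
      then show ?thesis using xa by (metis alt.simps(2) length_Cons)
    next
      assume xb: "x = b"
      have "\<mu> = alt a b (length \<mu>)" using IH xy xb \<open>\<mu> = y # \<mu>'\<close> by (auto simp: alt.simps)
      then show ?thesis using xb by (metis alt.simps(2) length_Cons)
    qed
  qed
qed

lemma LD: assumes a: "a \<in> {1..n}" and b: "b \<in> {1..n}" and ab: "a \<noteq> b" and s: "set \<rho> \<subseteq> {1..n}"
  shows "\<exists>\<mu> \<tau>. set \<mu> \<subseteq> {a, b} \<and> set \<tau> \<subseteq> {1..n} \<and> ww (\<mu> @ \<tau>) = ww \<rho> \<and> length \<mu> + length \<tau> = lw \<rho>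
     \<and> red (\<mu> @ \<tau>) \<and> lw \<tau> < lw (a # \<tau>) \<and> lw \<tau> < lw (b # \<tau>)"
proof -
  define Q where "Q \<mu> \<tau> \<longleftrightarrow> set \<mu> \<subseteq> {a, b} \<and> set \<tau> \<subseteq> {1..n} \<and> ww (\<mu> @ \<tau>) = ww \<rho> \<and> length \<mu> + length \<tau> = lw \<rho>" for \<mu> \<tau>
  obtain \<sigma> where \<sigma>: "set \<sigma> \<subseteq> {1..n}" "length \<sigma> = lw \<rho>" "ww \<sigma> = ww \<rho>" using lw_ex[OF s] by blast
  have ex: "\<exists>k \<mu> \<tau>. Q \<mu> \<tau> \<and> length \<tau> = k" using \<sigma> unfolding Q_def by (intro exI[of _ "length \<sigma>"] exI[of _ "[]"] exI[of _ \<sigma>]) auto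
  define k where "k = (LEAST k. \<exists>\<mu> \<tau>. Q \<mu> \<tau> \<and> length \<tau> = k)"
  obtain \<mu> \<tau> where Q: "Q \<mu> \<tau>" and k\<tau>: "length \<tau> = k" using LeastI_ex[OF ex] unfolding k_def by blast
  have min: "length \<tau> \<le> length \<tau>'" if "Q \<mu>' \<tau>'" for \<mu>' \<tau>'
    unfolding k\<tau> k_def by (rule Least_le) (use that in blast)
  have sm: "set \<mu> \<subseteq> {1..n}" using Q a b unfolding Q_def by auto
  have st: "set \<tau> \<subseteq> {1..n}" using Q unfolding Q_def by auto
  have "lw \<rho> = lw (\<mu> @ \<tau>)" using Q unfolding Q_def by (metis lw_cong)
  then have redmt: "red (\<mu> @ \<tau>)" using Q sm st unfolding Q_def red_def by auto
  then have red\<tau>: "lw \<tau> = length \<tau>" using red_suffix unfolding red_def by blast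
  have desc: "lw \<tau> < lw (c # \<tau>)" if c: "c \<in> {a, b}" for c
  proof (rule ccontr)
    assume "\<not> lw \<tau> < lw (c # \<tau>)"
    moreover have cI: "c \<in> {1..n}" using c a b by auto
    ultimately have e: "lw \<tau> = lw (c # \<tau>) + 1" using lw_Cons[OF cI st] by auto
    have st2: "set (c # \<tau>) \<subseteq> {1..n}" using cI st by simp
    obtain \<tau>' where \<tau>': "set \<tau>' \<subseteq> {1..n}" "length \<tau>' = lw (c # \<tau>)" "ww \<tau>' = ww (c # \<tau>)" using lw_ex[OF st2] by blast
    have "ww ((\<mu> @ [c]) @ \<tau>') v = ww (\<mu> @ \<tau>) v" for v
      using \<tau>'(3) sr_invol[OF cI] by (simp add: ww_append)
    then have "ww ((\<mu> @ [c]) @ \<tau>') = ww (\<mu> @ \<tau>)" by blast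
    then have "Q (\<mu> @ [c]) \<tau>'" using Q \<tau>' c e red\<tau> unfolding Q_def by auto
    then have "length \<tau> \<le> length \<tau>'" by (rule min)
    with e red\<tau> \<tau>' show False by simp
  qed
  show ?thesis using Q desc redmt unfolding Q_def by blast
qed

lemma ww_zero: "ww \<sigma> (\<lambda>_. 0) = (\<lambda>_. 0)"
  using ww_smult[of \<sigma> 0 "\<lambda>_. 0"] by simp

lemma ww_nz: assumes "set \<sigma> \<subseteq> {1..n}" "v \<noteq> (\<lambda>_. 0)" shows "ww \<sigma> v \<noteq> (\<lambda>_. 0)"
  using ww_inj[OF assms(1), of v "\<lambda>_. 0"] assms(2) ww_zero by metis

lemma ev_nz: "ev i \<noteq> (\<lambda>_. 0)" by (auto simp: ev_def fun_eq_iff)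

lemma pos_intro: "(\<And>k. 0 \<le> v k) \<Longrightarrow> v \<noteq> (\<lambda>_. 0) \<Longrightarrow> pos v"
  unfolding pos_def by (auto simp: fun_eq_iff)

lemma pos_ev: "pos (ev i)" unfolding pos_def ev_def by auto

lemma alt_not_red: assumes a: "a \<in> {1..n}" and b: "b \<in> {1..n}" and ab: "a \<noteq> b" and r: "red (alt a b k)"
  shows "k \<le> mm a b"
proof (rule ccontr)
  let ?m = "mm a b"
  assume "\<not> k \<le> ?m"
  then have "Suc ?m \<le> k" by simp
  then obtain t where "alt a b k = alt a b (Suc ?m) @ t" using alt_prefix by blast
  then have r2: "red (alt a b (Suc ?m))" using red_prefix r by metis
  have m1: "?m \<ge> 1" unfolding mm_def by simp
  then obtain m' where m': "?m = Suc m'" by (cases ?m) auto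
  have "ww (alt a b (Suc ?m)) = sr a \<circ> ww (alt b a ?m)" by (simp add: fun_eq_iff)
  also have "ww (alt b a ?m) = ww (alt a b ?m)" using braid_cl[OF a b ab] by simp
  also have "sr a \<circ> ww (alt a b ?m) = ww (alt b a m')" using m' sr_invol[OF a] by (simp add: fun_eq_iff)
  finally have "lw (alt a b (Suc ?m)) = lw (alt b a m')" by (rule lw_cong)
  also have "\<dots> \<le> m'"
  proof -
    have "set (alt b a m') \<subseteq> {1..n}" using alt_set[of b a m'] a b by auto
    then show ?thesis using lw_le[of "alt b a m'"] by simp
  qed
  finally show False using r2 m' unfolding red_def by simp
qed

lemma sr_ev: assumes a: "a \<in> {1..n}" shows "sr a (ev a) = (\<lambda>k. - ev a k)"
proof -
  have "(\<Sum>j\<in>{1..n}. A a j * ev a j) = (\<Sum>j\<in>{1..n}. if j = a then A a j else 0)"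
    by (rule sum.cong) (auto simp: ev_def)
  also have "\<dots> = A a a" using a by simp
  finally have "(\<Sum>j\<in>{1..n}. A a j * ev a j) = A a a" .
  then show ?thesis using Aii[OF a] unfolding sr_alt by (auto simp: fun_eq_iff ev_def)
qed

lemma supp2: assumes "set \<sigma> \<subseteq> {a, b}" "\<And>k. k \<noteq> a \<Longrightarrow> k \<noteq> b \<Longrightarrow> v k = 0"
  shows "k \<noteq> a \<Longrightarrow> k \<noteq> b \<Longrightarrow> ww \<sigma> v k = 0"
  using assms by (induction \<sigma> arbitrary: k) (auto simp: srefl_def)

lemma supp2_decomp: assumes "\<And>k. k \<noteq> a \<Longrightarrow> k \<noteq> b \<Longrightarrow> v k = 0" "a \<noteq> b"
  shows "v = (\<lambda>k. v a * ev a k + v b * ev b k)"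
  using assms by (auto simp: fun_eq_iff ev_def)

theorem K: "set \<rho> \<subseteq> {1..n} \<Longrightarrow> i \<in> {1..n} \<Longrightarrow> lw \<rho> < lw (i # \<rho>) \<Longrightarrow> pos (ww (rev \<rho>) (ev i))"
proof (induction "lw \<rho>" arbitrary: \<rho> i rule: less_induct)
  case less
  note s = less.prems(1) and i = less.prems(2) and up = less.prems(3)
  obtain \<sigma> where \<sigma>: "set \<sigma> \<subseteq> {1..n}" "length \<sigma> = lw \<rho>" "ww \<sigma> = ww \<rho>" using lw_ex[OF s] by blast
  have revc: "ww (rev \<rho>) = ww (rev \<sigma>)" using ww_cong_rev \<sigma> s by metis
  show ?case
  proof (cases \<sigma>)
    case Nil
    then show ?thesis using revc pos_ev by simp
  next
    case (Cons j \<sigma>')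
    have j: "j \<in> {1..n}" and s': "set \<sigma>' \<subseteq> {1..n}" using \<sigma> Cons by auto
    have ji: "j \<noteq> i"
    proof
      assume "j = i"
      then have "ww (i # \<rho>) = ww \<sigma>'" using \<sigma> Cons ww_dup[OF j] by (metis weyl_word.simps(2) comp_apply fun_eq_iff)
      then have "lw (i # \<rho>) \<le> length \<sigma>'" using lw_min[OF s'] by metis
      then show False using up \<sigma> Cons by simp
    qed
    have jdown: "lw (j # \<rho>) < lw \<rho>"
    proof -
      have "ww (j # \<rho>) = ww \<sigma>'" using \<sigma> Cons ww_dup[OF j] by (metis weyl_word.simps(2) comp_apply fun_eq_iff)
      then have "lw (j # \<rho>) \<le> length \<sigma>'" using lw_min[OF s'] by metis
      then show ?thesis using \<sigma> Cons by simp
    qed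
    obtain \<mu> \<tau> where D: "set \<mu> \<subseteq> {i, j}" "set \<tau> \<subseteq> {1..n}" "ww (\<mu> @ \<tau>) = ww \<rho>"
      "length \<mu> + length \<tau> = lw \<rho>" "red (\<mu> @ \<tau>)" "lw \<tau> < lw (i # \<tau>)" "lw \<tau> < lw (j # \<tau>)"
      using LD[OF i j ji[symmetric] s] by blast
    have sm: "set \<mu> \<subseteq> {1..n}" using D(1) i j by auto
    have red\<mu>: "red \<mu>" using red_prefix D(5) by blast
    have red\<tau>: "red \<tau>" using red_suffix D(5) by blast
    have \<mu>ne: "\<mu> \<noteq> []"
    proof
      assume "\<mu> = []"
      then have "ww \<tau> = ww \<rho>" using D by simp
      moreover have "ww (j # \<tau>) = ww (j # \<rho>)" using \<open>ww \<tau> = ww \<rho>\<close> by simp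
      ultimately have "lw (j # \<tau>) = lw (j # \<rho>)" "lw \<tau> = lw \<rho>" by (auto intro: lw_cong)
      then show False using D(7) jdown by simp
    qed
    have nohd: "hd \<mu> \<noteq> i"
    proof
      assume h: "hd \<mu> = i"
      then obtain \<mu>' where \<mu>': "\<mu> = i # \<mu>'" using \<mu>ne by (cases \<mu>) auto
      have "ww (i # \<rho>) = ww (\<mu>' @ \<tau>)" using D(3) \<mu>' ww_dup[OF i, of "\<mu>' @ \<tau>"] by (metis append_Cons weyl_word.simps(2) comp_apply fun_eq_iff)
      then have "lw (i # \<rho>) \<le> length (\<mu>' @ \<tau>)" using lw_min[of "\<mu>' @ \<tau>"] sm D(2) \<mu>' by (metis set_append le_sup_iff set_subset_Cons subset_trans)
      then show False using up D(4) \<mu>' by simp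
    qed
    define L where "L = length \<mu>"
    have \<mu>alt: "\<mu> = alt j i L"
      using alt_of_red[OF D(1) ji[symmetric] red\<mu>] nohd \<mu>ne unfolding L_def by (cases "length \<mu>") auto
    have Lpos: "L \<ge> 1" using \<mu>ne L_def by (cases \<mu>) auto
    have upi: "lw (i # \<rho>) = lw \<rho> + 1" using lw_Cons[OF i s] up by auto
    have "ww (i # \<rho>) = ww ((i # \<mu>) @ \<tau>)" using D(3) by simp
    then have "lw (i # \<rho>) = lw ((i # \<mu>) @ \<tau>)" by (rule lw_cong)
    also have "\<dots> \<le> lw (i # \<mu>) + lw \<tau>" using lw_append[of "i # \<mu>" \<tau>] i sm D(2) by simp
    finally have "lw (i # \<mu>) \<ge> L + 1" using upi D(4) red\<tau> unfolding red_def L_def by simp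
    moreover have "lw (i # \<mu>) \<le> L + 1" using lw_le[of "i # \<mu>"] i sm unfolding L_def by simp
    ultimately have "red (alt i j (Suc L))" using \<mu>alt i sm unfolding red_def by auto
    then have "Suc L \<le> mm i j" using alt_not_red[OF i j ji[symmetric]] by blast
    then obtain c c' where cc: "c \<ge> 0" "c' \<ge> 0" "ww (rev (alt j i L)) (ev i) = (\<lambda>k. c * ev i k + c' * ev j k)"
      using R2[OF i j ji[symmetric]] by (metis Suc_le_lessD)
    have lt: "lw \<tau> < lw \<rho>" using red\<tau> D(4) Lpos L_def unfolding red_def by simp
    have Pi: "pos (ww (rev \<tau>) (ev i))" by (rule less.hyps[OF lt D(2) i D(6)])
    have Pj: "pos (ww (rev \<tau>) (ev j))" by (rule less.hyps[OF lt D(2) j D(7)])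
    have "ww (rev \<rho>) = ww (rev (\<mu> @ \<tau>))" using ww_cong_rev[OF _ s D(3)] sm D(2) by simp
    also have "\<dots> = ww (rev \<tau>) \<circ> ww (rev \<mu>)" by (simp add: ww_append)
    finally have e: "ww (rev \<rho>) (ev i) = (\<lambda>k. c * ww (rev \<tau>) (ev i) k + c' * ww (rev \<tau>) (ev j) k)"
      using cc(3) \<mu>alt by (simp add: ww_lin2)
    show ?thesis
    proof (rule pos_intro)
      fix k show "0 \<le> ww (rev \<rho>) (ev i) k" unfolding e using cc Pi Pj unfolding pos_def by simp
    next
      show "ww (rev \<rho>) (ev i) \<noteq> (\<lambda>_. 0)" using ww_nz[of "rev \<rho>" "ev i"] s ev_nz by simp
    qed
  qed
qed

lemma pos_neg_False: "pos v \<Longrightarrow> pos (\<lambda>k. - v k) \<Longrightarrow> False"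
  unfolding pos_def by (metis add.inverse_neutral antisym neg_0_le_iff_le)

theorem Kc: assumes s: "set \<rho> \<subseteq> {1..n}" and a: "a \<in> {1..n}" and p: "pos (ww (rev \<rho>) (ev a))"
  shows "lw \<rho> < lw (a # \<rho>)"
proof (rule ccontr)
  assume "\<not> lw \<rho> < lw (a # \<rho>)"
  then have dn: "lw \<rho> = lw (a # \<rho>) + 1" using lw_Cons[OF a s] by auto
  have s2: "set (a # \<rho>) \<subseteq> {1..n}" using a s by simp
  have "lw (a # a # \<rho>) = lw \<rho>" using ww_dup[OF a] by (metis lw_cong)
  then have "lw (a # \<rho>) < lw (a # (a # \<rho>))" using dn by simp
  then have "pos (ww (rev (a # \<rho>)) (ev a))" using K[OF s2 a] by blast
  moreover have "ww (rev (a # \<rho>)) (ev a) = (\<lambda>k. - ww (rev \<rho>) (ev a) k)"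
    using sr_ev[OF a] by (simp add: ww_append ww_neg)
  ultimately show False using p pos_neg_False by metis
qed

lemma alt_red: assumes a: "a \<in> {1..n}" and b: "b \<in> {1..n}" and ab: "a \<noteq> b" and k: "k \<le> mm a b"
  shows "red (alt a b k)"
  using a b ab k
proof (induction k arbitrary: a b)
  case 0 then show ?case by (simp add: red_def lw_def len_def)
next
  case (Suc k)
  have sI: "set (alt b a k) \<subseteq> {1..n}" using alt_set[of b a k] Suc.prems by auto
  have r: "red (alt b a k)" using Suc.IH[of b a] Suc.prems mm_sym by simp
  obtain c c' where cc: "c \<ge> 0" "c' \<ge> 0" "ww (rev (alt b a k)) (ev a) = (\<lambda>l. c * ev a l + c' * ev b l)"
    using R2[of a b k] Suc.prems by (metis Suc_le_lessD)
  have "pos (ww (rev (alt b a k)) (ev a))"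
  proof (rule pos_intro)
    fix l show "0 \<le> ww (rev (alt b a k)) (ev a) l" unfolding cc(3) using cc by (simp add: ev_def)
  next
    show "ww (rev (alt b a k)) (ev a) \<noteq> (\<lambda>_. 0)" using ww_nz[of "rev (alt b a k)" "ev a"] sI ev_nz by simp
  qed
  then have "lw (alt b a k) < lw (a # alt b a k)" using Kc[OF sI] Suc.prems by blast
  moreover have "lw (a # alt b a k) \<le> Suc k" using lw_le[of "a # alt b a k"] sI Suc.prems by simp
  ultimately show ?case using r sI Suc.prems unfolding red_def by simp
qed

lemma pos_comb2: assumes "set \<tau> \<subseteq> {1..n}" "pos (ww \<tau> (ev a))" "pos (ww \<tau> (ev b))" "c \<ge> 0" "c' \<ge> 0"
   "(\<lambda>k. c * ev a k + c' * ev b k) \<noteq> (\<lambda>_. 0)"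
  shows "pos (ww \<tau> (\<lambda>k. c * ev a k + c' * ev b k))"
proof (rule pos_intro)
  fix k show "0 \<le> ww \<tau> (\<lambda>k. c * ev a k + c' * ev b k) k" using assms unfolding ww_lin2 pos_def by simp
next
  show "ww \<tau> (\<lambda>k. c * ev a k + c' * ev b k) \<noteq> (\<lambda>_. 0)" using ww_nz assms by blast
qed

theorem F: assumes a: "a \<in> {1..n}" and b: "b \<in> {1..n}" and ab: "a \<noteq> b" and s: "set \<rho> \<subseteq> {1..n}"
  and da: "lw (a # \<rho>) < lw \<rho>" and db: "lw (b # \<rho>) < lw \<rho>"
  shows "\<exists>\<tau>. set \<tau> \<subseteq> {1..n} \<and> ww (alt a b (mm a b) @ \<tau>) = ww \<rho> \<and> mm a b + length \<tau> = lw \<rho>"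
proof -
  obtain \<mu> \<tau> where D: "set \<mu> \<subseteq> {a, b}" "set \<tau> \<subseteq> {1..n}" "ww (\<mu> @ \<tau>) = ww \<rho>"
      "length \<mu> + length \<tau> = lw \<rho>" "red (\<mu> @ \<tau>)" "lw \<tau> < lw (a # \<tau>)" "lw \<tau> < lw (b # \<tau>)"
      using LD[OF a b ab s] by blast
  have sm: "set \<mu> \<subseteq> {1..n}" using D(1) a b by auto
  have red\<mu>: "red \<mu>" using red_prefix D(5) by blast
  have revc: "ww (rev \<rho>) = ww (rev \<tau>) \<circ> ww (rev \<mu>)"
    using ww_cong_rev[OF _ s D(3)] sm D(2) by (simp add: ww_append)
  have desc: "lw (c # \<mu>) < lw \<mu>" if c: "c \<in> {a, b}" for c
  proof (rule ccontr)
    assume "\<not> lw (c # \<mu>) < lw \<mu>"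
    moreover have cI: "c \<in> {1..n}" using c a b by auto
    ultimately have up: "lw \<mu> < lw (c # \<mu>)" using lw_Cons[OF cI sm] by auto
    have P: "pos (ww (rev \<mu>) (ev c))" using K[OF sm cI up] .
    have srev: "set (rev \<mu>) \<subseteq> {a, b}" using D(1) by simp
    have sup: "\<And>k. k \<noteq> a \<Longrightarrow> k \<noteq> b \<Longrightarrow> ww (rev \<mu>) (ev c) k = 0"
      using supp2[OF srev, of "ev c"] c by (auto simp: ev_def)
    define w where "w = ww (rev \<mu>) (ev c)"
    have wd: "w = (\<lambda>k. w a * ev a k + w b * ev b k)" using supp2_decomp[of a b w] sup ab unfolding w_def by blast
    have Pa: "pos (ww (rev \<tau>) (ev a))" using K[OF D(2) a D(6)] .
    have Pb: "pos (ww (rev \<tau>) (ev b))" using K[OF D(2) b D(7)] .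
    have nz: "(\<lambda>k. w a * ev a k + w b * ev b k) \<noteq> (\<lambda>_. 0)" using P wd unfolding w_def pos_def by (metis)
    have "pos (ww (rev \<tau>) (\<lambda>k. w a * ev a k + w b * ev b k))"
      by (rule pos_comb2) (use D(2) Pa Pb P nz in \<open>auto simp: w_def pos_def\<close>)
    then have "pos (ww (rev \<rho>) (ev c))" using revc wd unfolding w_def by simp
    then have "lw \<rho> < lw (c # \<rho>)" using Kc[OF s cI] by blast
    then show False using c da db by auto
  qed
  have alt: "\<mu> = alt a b (length \<mu>) \<or> \<mu> = alt b a (length \<mu>)" using alt_of_red[OF D(1) ab red\<mu>] .
  have Lle: "length \<mu> \<le> mm a b" using alt alt_not_red[OF a b ab] alt_not_red[OF b a ab[symmetric]] red\<mu> mm_sym by metis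
  have Leq: "length \<mu> = mm a b"
  proof (rule ccontr)
    assume "length \<mu> \<noteq> mm a b"
    then have lt: "Suc (length \<mu>) \<le> mm a b" using Lle by simp
    from alt show False
    proof
      assume \<mu>a: "\<mu> = alt a b (length \<mu>)"
      have "red (alt b a (Suc (length \<mu>)))" using alt_red[OF b a ab[symmetric]] lt mm_sym by metis
      then have "red (b # \<mu>)" using \<mu>a by (metis alt.simps(2))
      then have "lw (b # \<mu>) = Suc (lw \<mu>)" using red\<mu> unfolding red_def by simp
      then show False using desc[of b] by simp
    next
      assume \<mu>b: "\<mu> = alt b a (length \<mu>)"
      have "red (alt a b (Suc (length \<mu>)))" using alt_red[OF a b ab] lt by metis
      then have "red (a # \<mu>)" using \<mu>b by (metis alt.simps(2))
      then have "lw (a # \<mu>) = Suc (lw \<mu>)" using red\<mu> unfolding red_def by simp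
      then show False using desc[of a] by simp
    qed
  qed
  have "ww \<mu> = ww (alt a b (mm a b))" using alt Leq braid_cl[OF a b ab] by metis
  then have "ww (alt a b (mm a b) @ \<tau>) = ww \<rho>" using D(3) by (simp add: ww_append)
  then show ?thesis using D(2,4) Leq by auto
qed

end

context cart begin

definition Bf :: "(nat \<Rightarrow> int) \<Rightarrow> (nat \<Rightarrow> int) \<Rightarrow> int" where
  "Bf u v = (\<Sum>p\<in>{1..n}. \<Sum>q\<in>{1..n}. u p * int (d p) * A p q * v q)"

lemma Bf_lin1: "Bf (\<lambda>k. a * u k + b * w k) v = a * Bf u v + b * Bf w v"
  unfolding Bf_def by (simp add: sum.distrib sum_distrib_left algebra_simps)
lemma Bf_lin2: "Bf v (\<lambda>k. a * u k + b * w k) = a * Bf v u + b * Bf v w"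
  unfolding Bf_def by (simp add: sum.distrib sum_distrib_left algebra_simps)

lemma Bf_ev_right: assumes k: "k \<in> {1..n}" shows "Bf u (ev k) = int (d k) * (\<Sum>p\<in>{1..n}. A k p * u p)"
proof -
  have "Bf u (ev k) = (\<Sum>p\<in>{1..n}. u p * int (d p) * A p k)"
    unfolding Bf_def by (rule sum.cong[OF refl]) (use k in \<open>simp add: ev_def if_distrib cong: if_cong\<close>)
  also have "\<dots> = (\<Sum>p\<in>{1..n}. int (d k) * (A k p * u p))"
    by (rule sum.cong[OF refl]) (use dsym k in \<open>auto simp: algebra_simps\<close>)
  finally show ?thesis by (simp add: sum_distrib_left)
qed

lemma Bf_ev_left: assumes k: "k \<in> {1..n}" shows "Bf (ev k) v = int (d k) * (\<Sum>q\<in>{1..n}. A k q * v q)"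
proof -
  have "Bf (ev k) v = (\<Sum>p\<in>{1..n}. if p = k then (\<Sum>q\<in>{1..n}. int (d p) * A p q * v q) else 0)"
    unfolding Bf_def by (rule sum.cong[OF refl]) (auto simp: ev_def algebra_simps)
  also have "\<dots> = (\<Sum>q\<in>{1..n}. int (d k) * A k q * v q)" using k by simp
  finally show ?thesis by (simp add: sum_distrib_left algebra_simps)
qed

lemma Bf_evev: "k \<in> {1..n} \<Longrightarrow> Bf (ev k) (ev k) = 2 * int (d k)"
  using Bf_ev_left[of k "ev k"] Aii[of k] by (simp add: ev_def if_distrib cong: if_cong)

lemma Bf_sr: assumes k: "k \<in> {1..n}" shows "Bf (sr k u) (sr k v) = Bf u v"
proof -
  define s where "s = (\<Sum>j\<in>{1..n}. A k j * u j)"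
  define t where "t = (\<Sum>j\<in>{1..n}. A k j * v j)"
  have su: "sr k u = (\<lambda>j. 1 * u j + (- s) * ev k j)" unfolding sr_alt s_def by (auto simp: fun_eq_iff ev_def)
  have sv: "sr k v = (\<lambda>j. 1 * v j + (- t) * ev k j)" unfolding sr_alt t_def by (auto simp: fun_eq_iff ev_def)
  have "Bf (sr k u) (sr k v) = Bf u v - t * Bf u (ev k) - s * Bf (ev k) v + s * t * Bf (ev k) (ev k)"
    unfolding su sv Bf_lin1 Bf_lin2 by (simp add: algebra_simps)
  also have "\<dots> = Bf u v" unfolding Bf_evev[OF k] unfolding Bf_ev_right[OF k] Bf_ev_left[OF k] s_def[symmetric] t_def[symmetric]
    by (simp add: algebra_simps)
  finally show ?thesis .
qed

lemma Bf_ww: "set \<rho> \<subseteq> {1..n} \<Longrightarrow> Bf (ww \<rho> u) (ww \<rho> v) = Bf u v"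
  by (induction \<rho>) (auto simp: Bf_sr)

lemma Bf_pos: assumes "\<exists>i\<in>{1..n}. u i \<noteq> 0" shows "Bf u u > 0"
proof -
  have "(\<Sum>i\<in>{1..n}. \<Sum>j\<in>{1..n}. real_of_int (u i) * real (d i) * real_of_int (A i j) * real_of_int (u j)) > 0"
    by (rule PD) (use assms in auto)
  moreover have "(\<Sum>i\<in>{1..n}. \<Sum>j\<in>{1..n}. real_of_int (u i) * real (d i) * real_of_int (A i j) * real_of_int (u j)) = real_of_int (Bf u u)"
    unfolding Bf_def by simp
  ultimately show ?thesis by simp
qed

lemma sr_ev_other: assumes "p \<in> {1..n}" "p \<noteq> q" shows "sr q (ev p) = (\<lambda>k. 1 * ev p k + (- A q p) * ev q k)"
proof -
  have "(\<Sum>j\<in>{1..n}. A q j * ev p j) = (if p \<in> {1..n} then A q p else 0)"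
    by (simp add: ev_def if_distrib cong: if_cong)
  then show ?thesis unfolding sr_alt using assms by (auto simp: fun_eq_iff ev_def)
qed

lemma exists_nonorth: assumes m: "m \<in> {1..n}" and b: "b \<in> {1..n}"
  shows "\<exists>\<rho>. set \<rho> \<subseteq> {1..n} \<and> Bf (ww \<rho> (ev m)) (ev b) \<noteq> 0"
proof (rule ccontr)
  assume na: "\<not> ?thesis"
  define J where "J = {k \<in> {1..n}. \<forall>\<rho>. set \<rho> \<subseteq> {1..n} \<longrightarrow> Bf (ww \<rho> (ev k)) (ev b) = 0}"
  have mJ: "m \<in> J" using na m unfolding J_def by blast
  have JI: "J = {1..n}"
  proof (rule ccontr)
    assume ne: "J \<noteq> {1..n}"
    have sub: "J \<subseteq> {1..n}" unfolding J_def by blast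
    have nemp: "J \<noteq> {}" using mJ by blast
    obtain p q where p: "p \<in> J" and q: "q \<in> {1..n} - J" and pq: "A p q \<noteq> 0"
      using indec[OF sub nemp ne] by blast
    have pI: "p \<in> {1..n}" using p sub by blast
    have qI: "q \<in> {1..n}" using q by blast
    have qJ: "q \<notin> J" using q by blast
    have pq': "p \<noteq> q" using p qJ by blast
    have qp: "A q p \<noteq> 0" using Azero[OF pI qI] pq by simp
    have pall: "\<forall>\<rho>. set \<rho> \<subseteq> {1..n} \<longrightarrow> Bf (ww \<rho> (ev p)) (ev b) = 0" using p unfolding J_def by blast
    have "Bf (ww \<rho> (ev q)) (ev b) = 0" if s: "set \<rho> \<subseteq> {1..n}" for \<rho>
    proof -
      have s2: "set (\<rho> @ [q]) \<subseteq> {1..n}" using s qI by simp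
      have z1: "Bf (ww (\<rho> @ [q]) (ev p)) (ev b) = 0" using pall s2 by blast
      have e: "ww (\<rho> @ [q]) (ev p) = (\<lambda>k. 1 * ww \<rho> (ev p) k + (- A q p) * ww \<rho> (ev q) k)"
        by (simp only: ww_append comp_apply weyl_word.simps id_apply sr_ev_other[OF pI pq'] ww_lin2)
      have z2: "Bf (ww (\<rho> @ [q]) (ev p)) (ev b) = 1 * Bf (ww \<rho> (ev p)) (ev b) + (- A q p) * Bf (ww \<rho> (ev q)) (ev b)"
        unfolding e by (rule Bf_lin1)
      have z3: "Bf (ww \<rho> (ev p)) (ev b) = 0" using pall s by blast
      show ?thesis using z1 z2 z3 qp by simp
    qed
    then have "q \<in> J" using qI unfolding J_def by blast
    then show False using qJ by blast
  qed
  have "b \<in> J" using JI b by simp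
  then have "\<forall>\<rho>. set \<rho> \<subseteq> {1..n} \<longrightarrow> Bf (ww \<rho> (ev b)) (ev b) = 0" unfolding J_def by blast
  then have "Bf (ww [] (ev b)) (ev b) = 0" by (metis empty_subsetI empty_set)
  then show False using Bf_evev[OF b] dpos[OF b] by simp
qed

lemma d_le3: assumes b: "b \<in> {1..n}" shows "d b \<le> 3"
proof -
  have "\<exists>m\<in>{1..n}. d m = 1" using sc unfolding simple_cartan_def by (elim conjE) assumption
  then obtain m where m: "m \<in> {1..n}" "d m = 1" by blast
  obtain \<rho> where \<rho>: "set \<rho> \<subseteq> {1..n}" "Bf (ww \<rho> (ev m)) (ev b) \<noteq> 0" using exists_nonorth[OF m(1) b] by blast
  define \<beta> where "\<beta> = ww \<rho> (ev m)"
  have BB: "Bf \<beta> \<beta> = 2" using Bf_ww[OF \<rho>(1)] Bf_evev[OF m(1)] m(2) unfolding \<beta>_def by simp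
  define N where "N = (\<Sum>p\<in>{1..n}. A b p * \<beta> p)"
  have Bb: "Bf \<beta> (ev b) = int (d b) * N" unfolding N_def by (rule Bf_ev_right[OF b])
  have N0: "N \<noteq> 0" using \<rho>(2) Bb unfolding \<beta>_def by auto
  have db: "int (d b) \<ge> 1" using dpos[OF b] by simp
  have "N * N > 0"
  proof (cases "N > 0")
    case True then show ?thesis by simp
  next
    case False then have "N < 0" using N0 by simp
    then show ?thesis by (simp add: mult_neg_neg)
  qed
  then have N2: "N * N \<ge> 1" by simp
  show ?thesis
  proof (cases "\<exists>i\<in>{1..n}. 2 * \<beta> i + (- N) * ev b i \<noteq> 0")
    case True
    have "Bf (\<lambda>k. 2 * \<beta> k + (- N) * ev b k) (\<lambda>k. 2 * \<beta> k + (- N) * ev b k) > 0" by (rule Bf_pos[OF True])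
    moreover have "Bf (\<lambda>k. 2 * \<beta> k + (- N) * ev b k) (\<lambda>k. 2 * \<beta> k + (- N) * ev b k)
        = 4 * Bf \<beta> \<beta> - 2 * N * Bf \<beta> (ev b) - 2 * N * Bf (ev b) \<beta> + N * N * Bf (ev b) (ev b)"
      unfolding Bf_lin1 Bf_lin2 by (simp add: algebra_simps)
    moreover have "Bf (ev b) \<beta> = int (d b) * N" unfolding N_def by (rule Bf_ev_left[OF b])
    ultimately have "0 < 8 - 2 * (N * N) * int (d b)" using BB Bb Bf_evev[OF b] by (simp add: algebra_simps)
    then have "(N * N) * int (d b) < 4" by simp
    moreover have "(N * N) * int (d b) \<ge> int (d b)" using N2 db by (simp add: mult_right_mono)
    ultimately show ?thesis by simp
  next
    case False
    then have z: "\<And>i. i \<in> {1..n} \<Longrightarrow> 2 * \<beta> i = N * ev b i" by auto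
    have zb: "\<beta> i = \<beta> b * ev b i + 0 * ev b i" if i: "i \<in> {1..n}" for i
      using z[OF i] by (cases "i = b") (auto simp: ev_def)
    have "Bf \<beta> \<beta> = Bf (\<lambda>k. \<beta> b * ev b k + 0 * ev b k) (\<lambda>k. \<beta> b * ev b k + 0 * ev b k)"
      unfolding Bf_def by (rule sum.cong[OF refl], rule sum.cong[OF refl]) (simp only: zb)
    also have "\<dots> = \<beta> b * \<beta> b * Bf (ev b) (ev b)" unfolding Bf_lin1 Bf_lin2 by (simp add: algebra_simps)
    finally have "\<beta> b * \<beta> b * (2 * int (d b)) = 2" using BB Bf_evev[OF b] by simp
    then have "(\<beta> b * \<beta> b) * int (d b) = 1" by simp
    moreover have "\<beta> b * \<beta> b \<ge> 0" by simp
    ultimately have "\<beta> b \<noteq> 0" by (cases "\<beta> b = 0") auto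
    then have "\<beta> b * \<beta> b > 0" by (auto simp: zero_less_mult_iff linorder_neq_iff)
    then have "int (d b) = 1" using \<open>(\<beta> b * \<beta> b) * int (d b) = 1\<close> pos_zmult_eq_1_iff by blast
    then show ?thesis by simp
  qed
qed

lemma d_short: assumes a: "a \<in> {1..n}" and b: "b \<in> {1..n}" and ab: "a \<noteq> b" and A: "A a b = -2 \<or> A a b = -3"
  shows "d a = 1 \<and> int (d b) = - A a b"
proof -
  have Aba: "A b a = -1" using pair_cases[OF a b ab] A by auto
  have rel: "int (d a) * A a b = - int (d b)" using dsym[OF a b] Aba by simp
  have "d b \<le> 3" by (rule d_le3[OF b])
  moreover have "d a \<ge> 1" using dpos[OF a] by simp
  ultimately have "d a = 1" using A rel by auto
  then show ?thesis using rel by simp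
qed

end

definition tt :: "int poly" where "tt = [:0, 1:]"

definition nonneg :: "int poly \<Rightarrow> bool" where "nonneg p \<longleftrightarrow> (\<forall>k. 0 \<le> coeff p k)"

lemma nonneg_0[simp]: "nonneg 0" unfolding nonneg_def by simp
lemma nonneg_1[simp]: "nonneg 1" unfolding nonneg_def by (simp add: coeff_1)
lemma nonneg_tt[simp]: "nonneg tt" unfolding nonneg_def tt_def by (simp add: coeff_pCons split: nat.splits)
lemma nonneg_add[simp]: "nonneg p \<Longrightarrow> nonneg q \<Longrightarrow> nonneg (p + q)" unfolding nonneg_def by simp
lemma nonneg_mult[simp]: "nonneg p \<Longrightarrow> nonneg q \<Longrightarrow> nonneg (p * q)"
  unfolding nonneg_def coeff_mult by (auto intro: sum_nonneg)
lemma nonneg_pow[simp]: "nonneg p \<Longrightarrow> nonneg (p ^ k)" by (induction k) auto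

fun st2d :: "int poly \<Rightarrow> int poly \<Rightarrow> int poly \<Rightarrow> int poly \<Rightarrow> bool \<Rightarrow> nat
    \<Rightarrow> int poly \<times> int poly \<times> int poly \<times> int poly \<Rightarrow> int poly \<times> int poly \<times> int poly \<times> int poly" where
  "st2d caa cbb cab cba f 0 s = s"
| "st2d caa cbb cab cba True (Suc k) s = (case st2d caa cbb cab cba False k s of (X, Y, U, V) \<Rightarrow> (caa * X, Y + cba * X, U + X, V))"
| "st2d caa cbb cab cba False (Suc k) s = (case st2d caa cbb cab cba True k s of (X, Y, U, V) \<Rightarrow> (X + cab * Y, cbb * Y, U, V + Y))"

lemma st2d_braid00: "st2d caa cbb 0 0 True 2 s = st2d caa cbb 0 0 False 2 s"
  by (cases s) (simp add: eval_nat_numeral algebra_simps split: prod.splits)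
lemma st2d_braid11: "st2d (- (z * z)) (- (z * z)) z z True 3 s = st2d (- (z * z)) (- (z * z)) z z False 3 s"
  by (cases s) (simp add: eval_nat_numeral algebra_simps split: prod.splits)
lemma st2d_braid12: "st2d (- (tt ^ 4)) (- (tt ^ 2)) tt (tt ^ 3 + tt) True 4 s = st2d (- (tt ^ 4)) (- (tt ^ 2)) tt (tt ^ 3 + tt) False 4 s"
  by (cases s) (simp add: eval_nat_numeral algebra_simps split: prod.splits)
lemma st2d_braid21: "st2d (- (tt ^ 2)) (- (tt ^ 4)) (tt ^ 3 + tt) tt True 4 s = st2d (- (tt ^ 2)) (- (tt ^ 4)) (tt ^ 3 + tt) tt False 4 s"
  by (cases s) (simp add: eval_nat_numeral algebra_simps split: prod.splits)
lemma st2d_braid13: "st2d (- (tt ^ 6)) (- (tt ^ 2)) tt (tt ^ 5 + tt ^ 3 + tt) True 6 s = st2d (- (tt ^ 6)) (- (tt ^ 2)) tt (tt ^ 5 + tt ^ 3 + tt) False 6 s"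
  by (cases s) (simp add: eval_nat_numeral algebra_simps split: prod.splits)
lemma st2d_braid31: "st2d (- (tt ^ 2)) (- (tt ^ 6)) (tt ^ 5 + tt ^ 3 + tt) tt True 6 s = st2d (- (tt ^ 2)) (- (tt ^ 6)) (tt ^ 5 + tt ^ 3 + tt) tt False 6 s"
  by (cases s) (simp add: eval_nat_numeral algebra_simps split: prod.splits)

lemma pos00: assumes "L < 2"
  shows "\<exists>\<alpha> \<beta>. nonneg \<alpha> \<and> nonneg \<beta> \<and> (\<forall>x y u v. fst (st2d caa cbb 0 0 False L (x, y, u, v)) = \<alpha> * x + \<beta> * y)"
proof -
  have "L = 0 \<or> L = 1" using assms by auto
  then show ?thesis
  proof (elim disjE)
    assume "L = 0"
    then show ?thesis by (intro exI[of _ "1"] exI[of _ "0"]) (simp add: eval_nat_numeral algebra_simps power_add[symmetric] split: prod.splits)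
  next
    assume "L = 1"
    then show ?thesis by (intro exI[of _ "1"] exI[of _ "0"]) (simp add: eval_nat_numeral algebra_simps power_add[symmetric] split: prod.splits)
  qed
qed

lemma pos11: assumes "L < 3" and nz: "nonneg z"
  shows "\<exists>\<alpha> \<beta>. nonneg \<alpha> \<and> nonneg \<beta> \<and> (\<forall>x y u v. fst (st2d (- (z * z)) (- (z * z)) z z False L (x, y, u, v)) = \<alpha> * x + \<beta> * y)"
proof -
  have "L = 0 \<or> L = 1 \<or> L = 2" using assms by auto
  then show ?thesis
  proof (elim disjE)
    assume "L = 0"
    then show ?thesis by (intro exI[of _ "1"] exI[of _ "0"]) (simp add: eval_nat_numeral algebra_simps power_add[symmetric] split: prod.splits)
  next
    assume "L = 1"
    then show ?thesis by (intro exI[of _ "1"] exI[of _ "z"]) (use nz in \<open>simp add: eval_nat_numeral algebra_simps power_add[symmetric] split: prod.splits\<close>)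
  next
    assume "L = 2"
    then show ?thesis by (intro exI[of _ "0"] exI[of _ "z"]) (use nz in \<open>simp add: eval_nat_numeral algebra_simps power_add[symmetric] split: prod.splits\<close>)
  qed
qed

lemma pos12: assumes "L < 4"
  shows "\<exists>\<alpha> \<beta>. nonneg \<alpha> \<and> nonneg \<beta> \<and> (\<forall>x y u v. fst (st2d (- (tt ^ 4)) (- (tt ^ 2)) tt (tt ^ 3 + tt) False L (x, y, u, v)) = \<alpha> * x + \<beta> * y)"
proof -
  have "L = 0 \<or> L = 1 \<or> L = 2 \<or> L = 3" using assms by auto
  then show ?thesis
  proof (elim disjE)
    assume "L = 0"
    then show ?thesis by (intro exI[of _ "1"] exI[of _ "0"]) (simp add: eval_nat_numeral algebra_simps power_add[symmetric] split: prod.splits)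
  next
    assume "L = 1"
    then show ?thesis by (intro exI[of _ "1"] exI[of _ "tt"]) (simp add: eval_nat_numeral algebra_simps power_add[symmetric] split: prod.splits)
  next
    assume "L = 2"
    then show ?thesis by (intro exI[of _ "tt ^ 2"] exI[of _ "tt"]) (simp add: eval_nat_numeral algebra_simps power_add[symmetric] split: prod.splits)
  next
    assume "L = 3"
    then show ?thesis by (intro exI[of _ "tt ^ 2"] exI[of _ "0"]) (simp add: eval_nat_numeral algebra_simps power_add[symmetric] split: prod.splits)
  qed
qed

lemma pos21: assumes "L < 4"
  shows "\<exists>\<alpha> \<beta>. nonneg \<alpha> \<and> nonneg \<beta> \<and> (\<forall>x y u v. fst (st2d (- (tt ^ 2)) (- (tt ^ 4)) (tt ^ 3 + tt) tt False L (x, y, u, v)) = \<alpha> * x + \<beta> * y)"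
proof -
  have "L = 0 \<or> L = 1 \<or> L = 2 \<or> L = 3" using assms by auto
  then show ?thesis
  proof (elim disjE)
    assume "L = 0"
    then show ?thesis by (intro exI[of _ "1"] exI[of _ "0"]) (simp add: eval_nat_numeral algebra_simps power_add[symmetric] split: prod.splits)
  next
    assume "L = 1"
    then show ?thesis by (intro exI[of _ "1"] exI[of _ "tt + tt ^ 3"]) (simp add: eval_nat_numeral algebra_simps power_add[symmetric] split: prod.splits)
  next
    assume "L = 2"
    then show ?thesis by (intro exI[of _ "tt ^ 4"] exI[of _ "tt + tt ^ 3"]) (simp add: eval_nat_numeral algebra_simps power_add[symmetric] split: prod.splits)
  next
    assume "L = 3"
    then show ?thesis by (intro exI[of _ "tt ^ 4"] exI[of _ "0"]) (simp add: eval_nat_numeral algebra_simps power_add[symmetric] split: prod.splits)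
  qed
qed

lemma pos13: assumes "L < 6"
  shows "\<exists>\<alpha> \<beta>. nonneg \<alpha> \<and> nonneg \<beta> \<and> (\<forall>x y u v. fst (st2d (- (tt ^ 6)) (- (tt ^ 2)) tt (tt ^ 5 + tt ^ 3 + tt) False L (x, y, u, v)) = \<alpha> * x + \<beta> * y)"
proof -
  have "L = 0 \<or> L = 1 \<or> L = 2 \<or> L = 3 \<or> L = 4 \<or> L = 5" using assms by auto
  then show ?thesis
  proof (elim disjE)
    assume "L = 0"
    then show ?thesis by (intro exI[of _ "1"] exI[of _ "0"]) (simp add: eval_nat_numeral algebra_simps power_add[symmetric] split: prod.splits)
  next
    assume "L = 1"
    then show ?thesis by (intro exI[of _ "1"] exI[of _ "tt"]) (simp add: eval_nat_numeral algebra_simps power_add[symmetric] split: prod.splits)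
  next
    assume "L = 2"
    then show ?thesis by (intro exI[of _ "tt ^ 2 + tt ^ 4"] exI[of _ "tt"]) (simp add: eval_nat_numeral algebra_simps power_add[symmetric] split: prod.splits)
  next
    assume "L = 3"
    then show ?thesis by (intro exI[of _ "tt ^ 2 + tt ^ 4"] exI[of _ "tt ^ 5"]) (simp add: eval_nat_numeral algebra_simps power_add[symmetric] split: prod.splits)
  next
    assume "L = 4"
    then show ?thesis by (intro exI[of _ "tt ^ 6"] exI[of _ "tt ^ 5"]) (simp add: eval_nat_numeral algebra_simps power_add[symmetric] split: prod.splits)
  next
    assume "L = 5"
    then show ?thesis by (intro exI[of _ "tt ^ 6"] exI[of _ "0"]) (simp add: eval_nat_numeral algebra_simps power_add[symmetric] split: prod.splits)
  qed
qed

lemma pos31: assumes "L < 6"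
  shows "\<exists>\<alpha> \<beta>. nonneg \<alpha> \<and> nonneg \<beta> \<and> (\<forall>x y u v. fst (st2d (- (tt ^ 2)) (- (tt ^ 6)) (tt ^ 5 + tt ^ 3 + tt) tt False L (x, y, u, v)) = \<alpha> * x + \<beta> * y)"
proof -
  have "L = 0 \<or> L = 1 \<or> L = 2 \<or> L = 3 \<or> L = 4 \<or> L = 5" using assms by auto
  then show ?thesis
  proof (elim disjE)
    assume "L = 0"
    then show ?thesis by (intro exI[of _ "1"] exI[of _ "0"]) (simp add: eval_nat_numeral algebra_simps power_add[symmetric] split: prod.splits)
  next
    assume "L = 1"
    then show ?thesis by (intro exI[of _ "1"] exI[of _ "tt + tt ^ 3 + tt ^ 5"]) (simp add: eval_nat_numeral algebra_simps power_add[symmetric] split: prod.splits)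
  next
    assume "L = 2"
    then show ?thesis by (intro exI[of _ "tt ^ 4 + tt ^ 6"] exI[of _ "tt + tt ^ 3 + tt ^ 5"]) (simp add: eval_nat_numeral algebra_simps power_add[symmetric] split: prod.splits)
  next
    assume "L = 3"
    then show ?thesis by (intro exI[of _ "tt ^ 4 + tt ^ 6"] exI[of _ "tt ^ 5 + tt ^ 7 + tt ^ 9"]) (simp add: eval_nat_numeral algebra_simps power_add[symmetric] split: prod.splits)
  next
    assume "L = 4"
    then show ?thesis by (intro exI[of _ "tt ^ 10"] exI[of _ "tt ^ 5 + tt ^ 7 + tt ^ 9"]) (simp add: eval_nat_numeral algebra_simps power_add[symmetric] split: prod.splits)
  next
    assume "L = 5"
    then show ?thesis by (intro exI[of _ "tt ^ 10"] exI[of _ "0"]) (simp add: eval_nat_numeral algebra_simps power_add[symmetric] split: prod.splits)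
  qed
qed

context cart begin

definition cc :: "nat \<Rightarrow> nat \<Rightarrow> int poly" where
  "cc k a = (if A k a = -1 then tt ^ d a else if A k a = -2 then tt ^ 3 + tt else if A k a = -3 then tt ^ 5 + tt ^ 3 + tt else 0)"

definition Tb :: "nat \<Rightarrow> (nat \<Rightarrow> int poly) \<Rightarrow> (nat \<Rightarrow> int poly)" where
  "Tb a g = (\<lambda>k. if k \<notin> {1..n} then g k else if k = a then - (tt ^ (2 * d a)) * g a else g k + cc k a * g a)"

fun Tv :: "nat list \<Rightarrow> (nat \<Rightarrow> int poly) \<Rightarrow> (nat \<Rightarrow> int poly)" where
  "Tv [] g = g"
| "Tv (a # \<rho>) g = Tb a (Tv \<rho> g)"

lemma Tv_append: "Tv (\<rho> @ \<sigma>) g = Tv \<rho> (Tv \<sigma> g)"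
  by (induction \<rho>) auto

definition prm :: "nat \<Rightarrow> nat \<Rightarrow> int poly \<times> int poly \<times> int poly \<times> int poly" where
  "prm a b = (- (tt ^ (2 * d a)), - (tt ^ (2 * d b)), cc a b, cc b a)"

lemma Tv_alt: assumes a: "a \<in> {1..n}" and b: "b \<in> {1..n}" and ab: "a \<noteq> b"
  shows "Tv (if f then alt a b k else alt b a k) g = (\<lambda>l. if l \<notin> {1..n} then g l
     else if l = a then fst (st2d (- (tt ^ (2 * d a))) (- (tt ^ (2 * d b))) (cc a b) (cc b a) f k (g a, g b, 0, 0))
     else if l = b then fst (snd (st2d (- (tt ^ (2 * d a))) (- (tt ^ (2 * d b))) (cc a b) (cc b a) f k (g a, g b, 0, 0)))
     else g l + cc l a * fst (snd (snd (st2d (- (tt ^ (2 * d a))) (- (tt ^ (2 * d b))) (cc a b) (cc b a) f k (g a, g b, 0, 0))))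
              + cc l b * snd (snd (snd (st2d (- (tt ^ (2 * d a))) (- (tt ^ (2 * d b))) (cc a b) (cc b a) f k (g a, g b, 0, 0)))))"
proof (induction k arbitrary: f)
  case 0 then show ?case by (auto simp: fun_eq_iff)
next
  case (Suc k)
  let ?S = "st2d (- (tt ^ (2 * d a))) (- (tt ^ (2 * d b))) (cc a b) (cc b a)"
  show ?case
  proof (cases f)
    case True
    have w: "Tv (alt b a k) g = (\<lambda>l. if l \<notin> {1..n} then g l
     else if l = a then fst (?S False k (g a, g b, 0, 0))
     else if l = b then fst (snd (?S False k (g a, g b, 0, 0)))
     else g l + cc l a * fst (snd (snd (?S False k (g a, g b, 0, 0)))) + cc l b * snd (snd (snd (?S False k (g a, g b, 0, 0)))))"
      using Suc.IH[of False] by simp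
    show ?thesis using True a b ab
      by (auto simp: fun_eq_iff w Tb_def algebra_simps split: prod.splits)
  next
    case False
    have w: "Tv (alt a b k) g = (\<lambda>l. if l \<notin> {1..n} then g l
     else if l = a then fst (?S True k (g a, g b, 0, 0))
     else if l = b then fst (snd (?S True k (g a, g b, 0, 0)))
     else g l + cc l a * fst (snd (snd (?S True k (g a, g b, 0, 0)))) + cc l b * snd (snd (snd (?S True k (g a, g b, 0, 0)))))"
      using Suc.IH[of True] by simp
    show ?thesis using False a b ab
      by (auto simp: fun_eq_iff w Tb_def algebra_simps split: prod.splits)
  qed
qed

lemma tt2: "tt ^ (2 * k) = tt ^ k * tt ^ k" by (simp add: mult_2 power_add)

lemma ptypes: assumes a: "a \<in> {1..n}" and b: "b \<in> {1..n}" and ab: "a \<noteq> b"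
  shows "(A a b = 0 \<and> A b a = 0 \<and> cc a b = 0 \<and> cc b a = 0)
    \<or> (A a b = -1 \<and> A b a = -1 \<and> cc a b = tt ^ d a \<and> cc b a = tt ^ d a \<and> d b = d a)
    \<or> (A a b = -1 \<and> A b a = -2 \<and> d a = 2 \<and> d b = 1 \<and> cc a b = tt \<and> cc b a = tt ^ 3 + tt)
    \<or> (A a b = -2 \<and> A b a = -1 \<and> d a = 1 \<and> d b = 2 \<and> cc a b = tt ^ 3 + tt \<and> cc b a = tt)
    \<or> (A a b = -1 \<and> A b a = -3 \<and> d a = 3 \<and> d b = 1 \<and> cc a b = tt \<and> cc b a = tt ^ 5 + tt ^ 3 + tt)
    \<or> (A a b = -3 \<and> A b a = -1 \<and> d a = 1 \<and> d b = 3 \<and> cc a b = tt ^ 5 + tt ^ 3 + tt \<and> cc b a = tt)"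
proof -
  have ds: "int (d a) * A a b = int (d b) * A b a" by (rule dsym[OF a b])
  have s1: "A b a = -2 \<or> A b a = -3 \<Longrightarrow> d b = 1 \<and> int (d a) = - A b a" using d_short[OF b a ab[symmetric]] by blast
  have s2: "A a b = -2 \<or> A a b = -3 \<Longrightarrow> d a = 1 \<and> int (d b) = - A a b" using d_short[OF a b ab] by blast
  show ?thesis using pair_cases[OF a b ab]
  proof (elim disjE)
    assume h: "A a b = 0 \<and> A b a = 0" then show ?thesis unfolding cc_def by simp
  next
    assume h: "A a b = -1 \<and> A b a = -1"
    then have "d b = d a" using ds by simp
    then show ?thesis using h unfolding cc_def by simp
  next
    assume h: "A a b = -1 \<and> A b a = -2"
    then have "d b = 1" "d a = 2" using s1 by auto
    then show ?thesis using h unfolding cc_def by simp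
  next
    assume h: "A a b = -2 \<and> A b a = -1"
    then have "d a = 1" "d b = 2" using s2 by auto
    then show ?thesis using h unfolding cc_def by simp
  next
    assume h: "A a b = -1 \<and> A b a = -3"
    then have "d b = 1" "d a = 3" using s1 by auto
    then show ?thesis using h unfolding cc_def by simp
  next
    assume h: "A a b = -3 \<and> A b a = -1"
    then have "d a = 1" "d b = 3" using s2 by auto
    then show ?thesis using h unfolding cc_def by simp
  qed
qed

lemma st2d_braid: assumes a: "a \<in> {1..n}" and b: "b \<in> {1..n}" and ab: "a \<noteq> b"
  shows "st2d (- (tt ^ (2 * d a))) (- (tt ^ (2 * d b))) (cc a b) (cc b a) True (mm a b) s
       = st2d (- (tt ^ (2 * d a))) (- (tt ^ (2 * d b))) (cc a b) (cc b a) False (mm a b) s"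
  using ptypes[OF a b ab]
proof (elim disjE)
  assume h: "A a b = 0 \<and> A b a = 0 \<and> cc a b = 0 \<and> cc b a = 0"
  then have "mm a b = 2" unfolding mm_def by simp
  then show ?thesis using h st2d_braid00 by simp
next
  assume h: "A a b = -1 \<and> A b a = -1 \<and> cc a b = tt ^ d a \<and> cc b a = tt ^ d a \<and> d b = d a"
  then have "mm a b = 3" unfolding mm_def by simp
  then show ?thesis using h st2d_braid11[of "tt ^ d a"] by (simp add: tt2)
next
  assume h: "A a b = -1 \<and> A b a = -2 \<and> d a = 2 \<and> d b = 1 \<and> cc a b = tt \<and> cc b a = tt ^ 3 + tt"
  then have "mm a b = 4" unfolding mm_def by simp
  then show ?thesis using h st2d_braid12 by simp
next
  assume h: "A a b = -2 \<and> A b a = -1 \<and> d a = 1 \<and> d b = 2 \<and> cc a b = tt ^ 3 + tt \<and> cc b a = tt"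
  then have "mm a b = 4" unfolding mm_def by simp
  then show ?thesis using h st2d_braid21 by simp
next
  assume h: "A a b = -1 \<and> A b a = -3 \<and> d a = 3 \<and> d b = 1 \<and> cc a b = tt \<and> cc b a = tt ^ 5 + tt ^ 3 + tt"
  then have "mm a b = 6" unfolding mm_def by simp
  then show ?thesis using h st2d_braid13 by simp
next
  assume h: "A a b = -3 \<and> A b a = -1 \<and> d a = 1 \<and> d b = 3 \<and> cc a b = tt ^ 5 + tt ^ 3 + tt \<and> cc b a = tt"
  then have "mm a b = 6" unfolding mm_def by simp
  then show ?thesis using h st2d_braid31 by simp
qed

lemma braid_d: assumes a: "a \<in> {1..n}" and b: "b \<in> {1..n}" and ab: "a \<noteq> b"
  shows "Tv (alt a b (mm a b)) = Tv (alt b a (mm a b))"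
proof
  fix g
  define S where "S f = st2d (- (tt ^ (2 * d a))) (- (tt ^ (2 * d b))) (cc a b) (cc b a) f (mm a b) (g a, g b, 0, 0)" for f
  define F where "F f = (\<lambda>l. if l \<notin> {1..n} then g l else if l = a then fst (S f) else if l = b then fst (snd (S f))
     else g l + cc l a * fst (snd (snd (S f))) + cc l b * snd (snd (snd (S f))))" for f
  have 1: "Tv (alt a b (mm a b)) g = F True" using Tv_alt[OF a b ab, of True "mm a b" g] unfolding F_def S_def by simp
  have 2: "Tv (alt b a (mm a b)) g = F False" using Tv_alt[OF a b ab, of False "mm a b" g] unfolding F_def S_def by simp
  have e: "S True = S False" unfolding S_def by (rule st2d_braid[OF a b ab])
  show "Tv (alt a b (mm a b)) g = Tv (alt b a (mm a b)) g" unfolding 1 2 F_def e ..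
qed

lemma R2d: assumes i: "i \<in> {1..n}" and j: "j \<in> {1..n}" and ij: "i \<noteq> j" and L: "L < mm i j"
  shows "\<exists>\<alpha> \<beta>. nonneg \<alpha> \<and> nonneg \<beta> \<and> (\<forall>h. Tv (alt j i L) h i = \<alpha> * h i + \<beta> * h j)"
proof -
  have e: "Tv (alt j i L) h i = fst (st2d (- (tt ^ (2 * d i))) (- (tt ^ (2 * d j))) (cc i j) (cc j i) False L (h i, h j, 0, 0))" for h
    using Tv_alt[OF i j ij, of False L h] i by simp
  have "\<exists>\<alpha> \<beta>. nonneg \<alpha> \<and> nonneg \<beta> \<and> (\<forall>x y u v. fst (st2d (- (tt ^ (2 * d i))) (- (tt ^ (2 * d j))) (cc i j) (cc j i) False L (x, y, u, v)) = \<alpha> * x + \<beta> * y)"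
    using ptypes[OF i j ij]
  proof (elim disjE)
    assume h: "A i j = 0 \<and> A j i = 0 \<and> cc i j = 0 \<and> cc j i = 0"
    then have "L < 2" using L unfolding mm_def by simp
    then show ?thesis using h pos00 by simp
  next
    assume h: "A i j = -1 \<and> A j i = -1 \<and> cc i j = tt ^ d i \<and> cc j i = tt ^ d i \<and> d j = d i"
    then have "L < 3" using L unfolding mm_def by simp
    then show ?thesis using h pos11[of L "tt ^ d i"] by (simp add: tt2)
  next
    assume h: "A i j = -1 \<and> A j i = -2 \<and> d i = 2 \<and> d j = 1 \<and> cc i j = tt \<and> cc j i = tt ^ 3 + tt"
    then have "L < 4" using L unfolding mm_def by simp
    then show ?thesis using h pos12 by simp
  next
    assume h: "A i j = -2 \<and> A j i = -1 \<and> d i = 1 \<and> d j = 2 \<and> cc i j = tt ^ 3 + tt \<and> cc j i = tt"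
    then have "L < 4" using L unfolding mm_def by simp
    then show ?thesis using h pos21 by simp
  next
    assume h: "A i j = -1 \<and> A j i = -3 \<and> d i = 3 \<and> d j = 1 \<and> cc i j = tt \<and> cc j i = tt ^ 5 + tt ^ 3 + tt"
    then have "L < 6" using L unfolding mm_def by simp
    then show ?thesis using h pos13 by simp
  next
    assume h: "A i j = -3 \<and> A j i = -1 \<and> d i = 1 \<and> d j = 3 \<and> cc i j = tt ^ 5 + tt ^ 3 + tt \<and> cc j i = tt"
    then have "L < 6" using L unfolding mm_def by simp
    then show ?thesis using h pos31 by simp
  qed
  then show ?thesis using e by metis
qed

theorem M: "red \<rho> \<Longrightarrow> red \<sigma> \<Longrightarrow> ww \<rho> = ww \<sigma> \<Longrightarrow> Tv \<rho> = Tv \<sigma>"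
proof (induction "length \<rho>" arbitrary: \<rho> \<sigma> rule: less_induct)
  case less
  note rr = less.prems(1) and rs = less.prems(2) and e = less.prems(3)
  have s\<rho>: "set \<rho> \<subseteq> {1..n}" and s\<sigma>: "set \<sigma> \<subseteq> {1..n}" using rr rs unfolding red_def by auto
  have len: "length \<sigma> = length \<rho>" using rr rs lw_cong[OF e] unfolding red_def by simp
  show ?case
  proof (cases \<rho>)
    case Nil
    then have "\<sigma> = []" using len by simp
    then show ?thesis using Nil by simp
  next
    case (Cons a \<rho>')
    then obtain b \<sigma>' where \<sigma>: "\<sigma> = b # \<sigma>'" using len by (cases \<sigma>) auto
    have a: "a \<in> {1..n}" using s\<rho> Cons by simp
    have b: "b \<in> {1..n}" using s\<sigma> \<sigma> by simp
    have r\<rho>': "red \<rho>'" using red_suffix[of "[a]" \<rho>'] rr Cons by simp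
    have r\<sigma>': "red \<sigma>'" using red_suffix[of "[b]" \<sigma>'] rs \<sigma> by simp
    show ?thesis
    proof (cases "a = b")
      case True
      have "ww \<rho>' = ww \<sigma>'" using ww_cancel[OF a] e Cons \<sigma> True by simp
      then have "Tv \<rho>' = Tv \<sigma>'" using less.hyps[of \<rho>' \<sigma>'] r\<rho>' r\<sigma>' Cons by simp
      then show ?thesis using Cons \<sigma> True by (intro ext) simp
    next
      case False
      have s\<rho>': "set \<rho>' \<subseteq> {1..n}" and s\<sigma>': "set \<sigma>' \<subseteq> {1..n}" using s\<rho> s\<sigma> Cons \<sigma> by auto
      have da: "lw (a # \<rho>) < lw \<rho>"
      proof -
        have "ww (a # \<rho>) = ww \<rho>'" using ww_dup[OF a] Cons by simp
        then have "lw (a # \<rho>) \<le> length \<rho>'" using lw_min[OF s\<rho>'] by metis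
        then show ?thesis using rr Cons unfolding red_def by simp
      qed
      have db: "lw (b # \<rho>) < lw \<rho>"
      proof -
        have "ww (b # \<rho>) v = ww \<sigma>' v" for v
        proof -
          have "ww (b # \<rho>) v = sr b (ww \<sigma> v)" using e by simp
          also have "\<dots> = ww \<sigma>' v" using \<sigma> sr_invol[OF b] by simp
          finally show ?thesis .
        qed
        then have "ww (b # \<rho>) = ww \<sigma>'" by blast
        then have "lw (b # \<rho>) \<le> length \<sigma>'" using lw_min[OF s\<sigma>'] by metis
        then show ?thesis using rr Cons len \<sigma> unfolding red_def by simp
      qed
      obtain \<tau> where \<tau>: "set \<tau> \<subseteq> {1..n}" "ww (alt a b (mm a b) @ \<tau>) = ww \<rho>" "mm a b + length \<tau> = lw \<rho>"
        using F[OF a b False s\<rho> da db] by blast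
      have m1: "mm a b \<ge> 1" unfolding mm_def by simp
      then obtain m' where m': "mm a b = Suc m'" by (cases "mm a b") auto
      have sa: "set (alt a b (mm a b)) \<subseteq> {1..n}" "set (alt b a (mm a b)) \<subseteq> {1..n}" using alt_set a b by blast+
      have ea: "ww (alt a b (mm a b) @ \<tau>) = ww \<rho>" by (rule \<tau>(2))
      have eb: "ww (alt b a (mm a b) @ \<tau>) = ww \<rho>" using \<tau>(2) braid_cl[OF a b False] by (simp add: ww_append)
      have ra: "red (alt a b (mm a b) @ \<tau>)" using sa \<tau> lw_cong[OF ea] unfolding red_def by simp
      have rb: "red (alt b a (mm a b) @ \<tau>)" using sa \<tau> lw_cong[OF eb] unfolding red_def by simp
      have pa: "alt a b (mm a b) @ \<tau> = a # (alt b a m' @ \<tau>)" using m' by simp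
      have pb: "alt b a (mm a b) @ \<tau> = b # (alt a b m' @ \<tau>)" using m' by simp
      have 1: "Tv \<rho>' = Tv (alt b a m' @ \<tau>)"
      proof -
        have "red (alt b a m' @ \<tau>)" using red_suffix[of "[a]"] ra pa by simp
        moreover have "ww \<rho>' = ww (alt b a m' @ \<tau>)" using ww_cancel[OF a, of \<rho>' "alt b a m' @ \<tau>"] ea pa Cons by simp
        ultimately show ?thesis using less.hyps[of \<rho>'] r\<rho>' Cons by simp
      qed
      have 2: "Tv \<sigma>' = Tv (alt a b m' @ \<tau>)"
      proof -
        have "red (alt a b m' @ \<tau>)" using red_suffix[of "[b]"] rb pb by simp
        moreover have "ww \<sigma>' = ww (alt a b m' @ \<tau>)" using ww_cancel[OF b, of \<sigma>' "alt a b m' @ \<tau>"] eb pb e \<sigma> by simp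
        ultimately show ?thesis using less.hyps[of \<sigma>'] r\<sigma>' len \<sigma> Cons by simp
      qed
      have "Tv \<rho> = Tv (alt a b (mm a b) @ \<tau>)" unfolding pa Cons using 1 by (intro ext) simp
      also have "\<dots> = Tv (alt b a (mm a b) @ \<tau>)" using braid_d[OF a b False] by (intro ext) (simp add: Tv_append)
      also have "\<dots> = Tv \<sigma>" unfolding pb \<sigma> using 2 by (intro ext) simp
      finally show ?thesis .
    qed
  qed
qed

lemma LDup: assumes i: "i \<in> {1..n}" and j: "j \<in> {1..n}" and ij: "i \<noteq> j" and s: "set \<rho> \<subseteq> {1..n}"
  and up: "lw \<rho> < lw (i # \<rho>)" and jdown: "lw (j # \<rho>) < lw \<rho>"
  shows "\<exists>L \<tau>. 1 \<le> L \<and> L < mm i j \<and> set \<tau> \<subseteq> {1..n} \<and> ww (alt j i L @ \<tau>) = ww \<rho> \<and> L + length \<tau> = lw \<rho>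
     \<and> red \<tau> \<and> lw \<tau> < lw (i # \<tau>) \<and> lw \<tau> < lw (j # \<tau>)"
proof -
  obtain \<mu> \<tau> where D: "set \<mu> \<subseteq> {i, j}" "set \<tau> \<subseteq> {1..n}" "ww (\<mu> @ \<tau>) = ww \<rho>"
      "length \<mu> + length \<tau> = lw \<rho>" "red (\<mu> @ \<tau>)" "lw \<tau> < lw (i # \<tau>)" "lw \<tau> < lw (j # \<tau>)"
      using LD[OF i j ij s] by blast
  have sm: "set \<mu> \<subseteq> {1..n}" using D(1) i j by auto
  have red\<mu>: "red \<mu>" using red_prefix D(5) by blast
  have red\<tau>: "red \<tau>" using red_suffix D(5) by blast
  have \<mu>ne: "\<mu> \<noteq> []"
  proof
    assume "\<mu> = []"
    then have "ww \<tau> = ww \<rho>" using D by simp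
    moreover have "ww (j # \<tau>) = ww (j # \<rho>)" using \<open>ww \<tau> = ww \<rho>\<close> by simp
    ultimately have "lw (j # \<tau>) = lw (j # \<rho>)" "lw \<tau> = lw \<rho>" by (auto intro: lw_cong)
    then show False using D(7) jdown by simp
  qed
  have nohd: "hd \<mu> \<noteq> i"
  proof
    assume h: "hd \<mu> = i"
    then obtain \<mu>' where \<mu>': "\<mu> = i # \<mu>'" using \<mu>ne by (cases \<mu>) auto
    have "ww (i # \<rho>) = ww (\<mu>' @ \<tau>)" using D(3) \<mu>' ww_dup[OF i, of "\<mu>' @ \<tau>"] by (metis append_Cons weyl_word.simps(2) comp_apply fun_eq_iff)
    then have "lw (i # \<rho>) \<le> length (\<mu>' @ \<tau>)" using lw_min[of "\<mu>' @ \<tau>"] sm D(2) \<mu>' by (metis set_append le_sup_iff set_subset_Cons subset_trans)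
    then show False using up D(4) \<mu>' by simp
  qed
  define L where "L = length \<mu>"
  have \<mu>alt: "\<mu> = alt j i L"
    using alt_of_red[OF D(1) ij red\<mu>] nohd \<mu>ne unfolding L_def by (cases "length \<mu>") auto
  have Lpos: "L \<ge> 1" using \<mu>ne L_def by (cases \<mu>) auto
  have upi: "lw (i # \<rho>) = lw \<rho> + 1" using lw_Cons[OF i s] up by auto
  have "ww (i # \<rho>) = ww ((i # \<mu>) @ \<tau>)" using D(3) by simp
  then have "lw (i # \<rho>) = lw ((i # \<mu>) @ \<tau>)" by (rule lw_cong)
  also have "\<dots> \<le> lw (i # \<mu>) + lw \<tau>" using lw_append[of "i # \<mu>" \<tau>] i sm D(2) by simp
  finally have "lw (i # \<mu>) \<ge> L + 1" using upi D(4) red\<tau> unfolding red_def L_def by simp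
  moreover have "lw (i # \<mu>) \<le> L + 1" using lw_le[of "i # \<mu>"] i sm unfolding L_def by simp
  ultimately have "red (alt i j (Suc L))" using \<mu>alt i sm unfolding red_def by auto
  then have "Suc L \<le> mm i j" using alt_not_red[OF i j ij] by blast
  moreover have "ww (alt j i L @ \<tau>) = ww \<rho>" using D(3) \<mu>alt by metis
  moreover have "L + length \<tau> = lw \<rho>" using D(4) unfolding L_def .
  ultimately show ?thesis using Lpos D(2,6,7) red\<tau> by (intro exI[of _ L] exI[of _ \<tau>]) simp
qed

theorem C: "red (i # \<rho>) \<Longrightarrow> (\<forall>k. nonneg (g k)) \<Longrightarrow> nonneg (Tv \<rho> g i)"
proof (induction "length \<rho>" arbitrary: \<rho> i g rule: less_induct)
  case less
  note ri = less.prems(1) and gn = less.prems(2)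
  have i: "i \<in> {1..n}" and s: "set \<rho> \<subseteq> {1..n}" using ri unfolding red_def by auto
  have r\<rho>: "red \<rho>" using red_suffix[of "[i]" \<rho>] ri by simp
  show ?case
  proof (cases \<rho>)
    case Nil then show ?thesis using gn by simp
  next
    case (Cons j \<rho>')
    have j: "j \<in> {1..n}" and s': "set \<rho>' \<subseteq> {1..n}" using s Cons by auto
    have ij: "i \<noteq> j" using red_dup[of i \<rho>'] ri Cons by auto
    have up: "lw \<rho> < lw (i # \<rho>)" using ri r\<rho> unfolding red_def by simp
    have jdown: "lw (j # \<rho>) < lw \<rho>"
    proof -
      have "ww (j # \<rho>) = ww \<rho>'" using ww_dup[OF j] Cons by simp
      then have "lw (j # \<rho>) \<le> length \<rho>'" using lw_min[OF s'] by metis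
      then show ?thesis using r\<rho> Cons unfolding red_def by simp
    qed
    obtain L \<tau> where D: "1 \<le> L" "L < mm i j" "set \<tau> \<subseteq> {1..n}" "ww (alt j i L @ \<tau>) = ww \<rho>" "L + length \<tau> = lw \<rho>"
      "red \<tau>" "lw \<tau> < lw (i # \<tau>)" "lw \<tau> < lw (j # \<tau>)" using LDup[OF i j ij s up jdown] by blast
    have sa: "set (alt j i L) \<subseteq> {1..n}" using alt_set i j by blast
    have ra: "red (alt j i L @ \<tau>)" using sa D lw_cong[OF D(4)] unfolding red_def by simp
    have TM: "Tv \<rho> = Tv (alt j i L @ \<tau>)" using M[OF r\<rho> ra] D(4) by simp
    define h where "h = Tv \<tau> g"
    have lt: "length \<tau> < length \<rho>" using D(1,5) r\<rho> unfolding red_def by simp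
    have rit: "red (i # \<tau>)" using D(3,6,7) i lw_Cons[OF i D(3)] unfolding red_def by auto
    have rjt: "red (j # \<tau>)" using D(3,6,8) j lw_Cons[OF j D(3)] unfolding red_def by auto
    have hi: "nonneg (h i)" unfolding h_def by (rule less.hyps[OF lt rit gn])
    have hj: "nonneg (h j)" unfolding h_def by (rule less.hyps[OF lt rjt gn])
    obtain \<alpha> \<beta> where ab: "nonneg \<alpha>" "nonneg \<beta>" "\<And>h. Tv (alt j i L) h i = \<alpha> * h i + \<beta> * h j"
      using R2d[OF i j ij D(2)] by blast
    have "Tv \<rho> g i = Tv (alt j i L) h i" unfolding TM h_def by (simp add: Tv_append)
    also have "\<dots> = \<alpha> * h i + \<beta> * h j" by (rule ab(3))
    finally show ?thesis using ab hi hj by simp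
  qed
qed

end

abbreviation sc :: "complex \<Rightarrow> complex poly \<Rightarrow> complex poly" where "sc c p \<equiv> pcompose p [:0, c:]"

lemma sc_nz: "c \<noteq> 0 \<Longrightarrow> r \<noteq> 0 \<Longrightarrow> sc c r \<noteq> 0"
  using pcompose_eq_0[of r "[:0, c:]"] by auto

lemma Fract_eq0: "r \<noteq> 0 \<Longrightarrow> Fract p r = 0 \<longleftrightarrow> p = 0"
  by (simp add: fract_expand(1) eq_fract)

lemma rscale_Fract: assumes c: "c \<noteq> 0" and r: "r \<noteq> 0"
  shows "rscale c (Fract p r) = Fract (sc c p) (sc c r)"
  unfolding rscale_def
proof (rule someI2[where a = "Fract (sc c p) (sc c r)"])
  show "\<exists>p' r'. r' \<noteq> 0 \<and> Fract p r = Fract p' r' \<and> Fract (sc c p) (sc c r) = Fract (sc c p') (sc c r')"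
    using r by blast
next
  fix g assume "\<exists>p' r'. r' \<noteq> 0 \<and> Fract p r = Fract p' r' \<and> g = Fract (sc c p') (sc c r')"
  then obtain p' r' where h: "r' \<noteq> 0" "Fract p r = Fract p' r'" "g = Fract (sc c p') (sc c r')" by blast
  have "p * r' = p' * r" using h r eq_fract(1) by blast
  then have "sc c (p * r') = sc c (p' * r)" by simp
  then have "sc c p' * sc c r = sc c p * sc c r'" by (simp add: pcompose_mult mult.commute)
  then show "g = Fract (sc c p) (sc c r)" using h(3) eq_fract(1)[OF sc_nz[OF c h(1)] sc_nz[OF c r]] by simp
qed

lemma rscale_0[simp]: "c \<noteq> 0 \<Longrightarrow> rscale c 0 = 0"
  using rscale_Fract[of c 1 0] by (simp add: fract_collapse)

lemma rscale_1[simp]: "c \<noteq> 0 \<Longrightarrow> rscale c 1 = 1"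
  using rscale_Fract[of c 1 1] by (simp add: fract_collapse pcompose_1)

lemma rscale_mult: assumes c: "c \<noteq> 0" shows "rscale c (f * g) = rscale c f * rscale c g"
proof -
  obtain p r where f: "f = Fract p r" "r \<noteq> 0" by (cases f)
  obtain p' r' where g: "g = Fract p' r'" "r' \<noteq> 0" by (cases g)
  show ?thesis using f g c by (simp add: rscale_Fract pcompose_mult)
qed

lemma rscale_inverse: assumes c: "c \<noteq> 0" shows "rscale c (inverse f) = inverse (rscale c f)"
proof -
  obtain p r where f: "f = Fract p r" "r \<noteq> 0" by (cases f)
  show ?thesis
  proof (cases "p = 0")
    case True then show ?thesis using f c by (simp add: fract_collapse)
  next
    case False then show ?thesis using f c by (simp add: rscale_Fract)
  qed
qed

lemma rscale_nz: assumes c: "c \<noteq> 0" and f: "f \<noteq> 0" shows "rscale c f \<noteq> 0"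
proof -
  obtain p r where fr: "f = Fract p r" "r \<noteq> 0" by (cases f)
  then have "p \<noteq> 0" using f fract_collapse(1) by auto
  moreover have "sc c r \<noteq> 0" "sc c p \<noteq> 0" using sc_nz c fr \<open>p \<noteq> 0\<close> by auto
  ultimately show ?thesis using fr rscale_Fract[OF c fr(2)] Fract_eq0[of "sc c r" "sc c p"] by simp
qed

lemma sc_sc: "sc c (sc c' p) = sc (c' * c) p"
proof -
  have "pcompose [:0, c':] [:0, c:] = [:0, c' * c:]" by (simp add: pcompose_pCons algebra_simps)
  then show ?thesis by (simp add: pcompose_assoc[symmetric])
qed

lemma rscale_rscale: assumes "c \<noteq> 0" "c' \<noteq> 0" shows "rscale c (rscale c' f) = rscale (c' * c) f"
proof -
  obtain p r where f: "f = Fract p r" "r \<noteq> 0" by (cases f)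
  show ?thesis using f assms sc_nz[of c' r] by (simp add: rscale_Fract sc_sc)
qed

lemma rscale_power: "c \<noteq> 0 \<Longrightarrow> rscale c (f ^ m) = rscale c f ^ m"
  by (induction m) (auto simp: rscale_mult)

lemma rscale_powi: assumes c: "c \<noteq> 0" shows "rscale c (f powi k) = rscale c f powi k"
  by (simp add: power_int_def rscale_power rscale_inverse c power_inverse[symmetric])

lemma rscale_lin: "c \<noteq> 0 \<Longrightarrow> rscale c (Fract [:1, - a:] 1) = Fract [:1, - (a * c):] 1"
  by (simp add: rscale_Fract pcompose_pCons pcompose_1)

lemma ratA_nz: assumes "f \<in> ratA" shows "f \<noteq> 0"
proof -
  obtain p r where h: "f = Fract p r" "poly r 0 \<noteq> 0" "poly p 0 = poly r 0" using assms unfolding ratA_def by blast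
  then have "r \<noteq> 0" "p \<noteq> 0" by auto
  then show ?thesis using h Fract_eq0[of r p] by simp
qed

lemma ratA_mult: "f \<in> ratA \<Longrightarrow> g \<in> ratA \<Longrightarrow> f * g \<in> ratA"
  unfolding ratA_def by auto (metis mult_fract poly_mult mult_eq_0_iff)

lemma ratA_inverse: "f \<in> ratA \<Longrightarrow> inverse f \<in> ratA"
  unfolding ratA_def by auto (metis inverse_fract)

lemma ratA_1: "1 \<in> ratA"
  unfolding ratA_def by (auto simp: fract_expand) (metis one_poly_eq_simps(1) poly_1 zero_neq_one)

lemma ratA_rscale: assumes c: "c \<noteq> 0" and f: "f \<in> ratA" shows "rscale c f \<in> ratA"
proof -
  obtain p r where h: "f = Fract p r" "poly r 0 \<noteq> 0" "poly p 0 = poly r 0" using f unfolding ratA_def by blast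
  have r: "r \<noteq> 0" using h by auto
  have "rscale c f = Fract (sc c p) (sc c r)" using h rscale_Fract[OF c r] by simp
  moreover have "poly (sc c r) 0 = poly r 0" "poly (sc c p) 0 = poly p 0" by (simp_all add: poly_pcompose)
  ultimately show ?thesis using h unfolding ratA_def
    by (intro CollectI exI[of _ "sc c p"] exI[of _ "sc c r"]) simp
qed

lemma ratA_powi: "f \<in> ratA \<Longrightarrow> f powi k \<in> ratA"
proof -
  assume f: "f \<in> ratA"
  have p: "g ^ m \<in> ratA" if "g \<in> ratA" for g m using that by (induction m) (auto simp: ratA_1 ratA_mult)
  show ?thesis unfolding power_int_def using p[OF f] p[OF ratA_inverse[OF f]] by (simp add: power_inverse)
qed

inductive_set Aplus :: "ratfun set" where
  one: "1 \<in> Aplus"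
| gen: "a \<noteq> 0 \<Longrightarrow> Fract [:1, - a:] 1 \<in> Aplus"
| mul: "f \<in> Aplus \<Longrightarrow> g \<in> Aplus \<Longrightarrow> f * g \<in> Aplus"

inductive_set Agrp :: "ratfun set" where
  one: "1 \<in> Agrp"
| gen: "a \<noteq> 0 \<Longrightarrow> Fract [:1, - a:] 1 \<in> Agrp"
| mul: "f \<in> Agrp \<Longrightarrow> g \<in> Agrp \<Longrightarrow> f * g \<in> Agrp"
| inv: "f \<in> Agrp \<Longrightarrow> inverse f \<in> Agrp"

lemma Aplus_Agrp: "f \<in> Aplus \<Longrightarrow> f \<in> Agrp"
  by (induction rule: Aplus.induct) (auto intro: Agrp.intros)

lemma lin_ratA: "Fract [:1, - a:] 1 \<in> ratA"
  unfolding ratA_def by force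

lemma Agrp_ratA: "f \<in> Agrp \<Longrightarrow> f \<in> ratA"
  by (induction rule: Agrp.induct) (auto simp: ratA_1 lin_ratA ratA_mult ratA_inverse)

lemma Aplus_rscale: assumes "c \<noteq> 0" shows "f \<in> Aplus \<Longrightarrow> rscale c f \<in> Aplus"
  by (induction rule: Aplus.induct) (use assms in \<open>auto simp: rscale_mult rscale_lin intro: Aplus.intros\<close>)

lemma Agrp_rscale: assumes "c \<noteq> 0" shows "f \<in> Agrp \<Longrightarrow> rscale c f \<in> Agrp"
  by (induction rule: Agrp.induct) (use assms in \<open>auto simp: rscale_mult rscale_lin rscale_inverse intro: Agrp.intros\<close>)

lemma Aplus_power: "f \<in> Aplus \<Longrightarrow> f ^ m \<in> Aplus"
  by (induction m) (auto intro: Aplus.intros)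

lemma Agrp_powi: "f \<in> Agrp \<Longrightarrow> f powi k \<in> Agrp"
proof -
  assume f: "f \<in> Agrp"
  have p: "g ^ m \<in> Agrp" if "g \<in> Agrp" for g m using that by (induction m) (auto intro: Agrp.intros)
  show ?thesis unfolding power_int_def using p[OF f] p[OF Agrp.inv[OF f]] by (simp add: power_inverse)
qed

lemma Fract_const_self: "c \<noteq> 0 \<Longrightarrow> Fract [:c:] [:c:] = (1 :: ratfun)"
  by (simp add: fract_expand(2) eq_fract)

lemma poly_Aplus: fixes p :: "complex poly" assumes "poly p 0 \<noteq> 0" shows "Fract p [:poly p 0:] \<in> Aplus"
  using assms
proof (induction "degree p" arbitrary: p rule: less_induct)
  case less
  show ?case
  proof (cases "degree p = 0")
    case True
    then obtain c where c: "p = [:c:]" by (metis degree_eq_zeroE)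
    then have "c \<noteq> 0" using less.prems by simp
    then show ?thesis using c Fract_const_self Aplus.one by simp
  next
    case False
    then have "\<not> constant (poly p)" using constant_degree[of p] by simp
    then obtain z where z: "poly p z = 0" using fundamental_theorem_of_algebra by blast
    have z0: "z \<noteq> 0" using less.prems z by auto
    obtain p' where p': "p = [:-z, 1:] * p'" using z poly_eq_0_iff_dvd by (metis dvdE)
    have pnz: "p \<noteq> 0" using less.prems by auto
    then have p'nz: "p' \<noteq> 0" using p' by auto
    have "degree p = degree [:-z, 1:] + degree p'" unfolding p' using p'nz by (subst degree_mult_eq) auto
    then have deg: "degree p' < degree p" by simp
    have p0: "poly p 0 = - z * poly p' 0" using p' by simp
    then have p'0: "poly p' 0 \<noteq> 0" using less.prems by auto
    have IH: "Fract p' [:poly p' 0:] \<in> Aplus" using less.hyps[OF deg p'0] .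
    have e: "Fract p [:poly p 0:] = Fract [:1, - (1 / z):] 1 * Fract p' [:poly p' 0:]"
    proof -
      have k: "[:1, - (1 / z):] * [:- z:] = [:- z, 1:]" using z0 by simp
      have k2: "[:poly p 0:] = [:- z:] * [:poly p' 0:]" unfolding p0 by simp
      have "p * [:poly p' 0:] = ([:1, - (1 / z):] * [:- z:]) * p' * [:poly p' 0:]" unfolding k p' by simp
      also have "\<dots> = [:1, - (1 / z):] * p' * [:poly p 0:]" unfolding k2 by (simp only: mult_ac)
      finally have "p * [:poly p' 0:] = [:1, - (1 / z):] * p' * [:poly p 0:]" .
      then show ?thesis using p'0 less.prems by (simp add: eq_fract)
    qed
    show ?thesis unfolding e by (rule Aplus.mul[OF Aplus.gen IH]) (use z0 in simp)
  qed
qed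

lemma ratA_Agrp: assumes "f \<in> ratA" shows "f \<in> Agrp"
proof -
  obtain p r where h: "f = Fract p r" "poly r 0 \<noteq> 0" "poly p 0 = poly r 0" using assms unfolding ratA_def by blast
  define c where "c = poly r 0"
  have c: "c \<noteq> 0" using h c_def by simp
  have r: "r \<noteq> 0" using h by auto
  have "Fract p [:poly p 0:] \<in> Aplus" by (rule poly_Aplus) (use h in simp)
  then have 1: "Fract p [:c:] \<in> Agrp" using Aplus_Agrp h(3) c_def by simp
  have "Fract r [:poly r 0:] \<in> Aplus" by (rule poly_Aplus) (use h in simp)
  then have 2: "Fract r [:c:] \<in> Agrp" using Aplus_Agrp h c_def by simp
  have "f = Fract p [:c:] * inverse (Fract r [:c:])"
    using h c r by (simp add: eq_fract mult.commute)
  then show ?thesis using Agrp.mul[OF 1 Agrp.inv[OF 2]] by simp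
qed

definition pact :: "complex \<Rightarrow> int poly \<Rightarrow> ratfun \<Rightarrow> ratfun" where
  "pact q p = fold_coeffs (\<lambda>a g f. f powi a * g (rscale q f)) p (\<lambda>f. 1)"

lemma pact_0[simp]: "pact q 0 f = 1" unfolding pact_def by simp

lemma pact_pCons: "pact q (pCons a p) f = f powi a * pact q p (rscale q f)"
proof (cases "p = 0")
  case True
  show ?thesis
  proof (cases "a = 0")
    case True then show ?thesis using \<open>p = 0\<close> by simp
  next
    case False then show ?thesis using \<open>p = 0\<close> unfolding pact_def by simp
  qed
next
  case False then show ?thesis unfolding pact_def by simp
qed

lemma pact_add: assumes q: "q \<noteq> 0" shows "f \<noteq> 0 \<Longrightarrow> pact q (p + p') f = pact q p f * pact q p' f"
proof (induction p arbitrary: p' f rule: pCons_induct)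
  case 0 then show ?case by simp
next
  case (pCons a p)
  obtain a' p'' where p': "p' = pCons a' p''" by (cases p') auto
  have fq: "rscale q f \<noteq> 0" using rscale_nz[OF q pCons.prems] .
  have "pact q (pCons a p + p') f = f powi (a + a') * pact q (p + p'') (rscale q f)"
    unfolding p' by (simp add: pact_pCons)
  also have "\<dots> = (f powi a * f powi a') * (pact q p (rscale q f) * pact q p'' (rscale q f))"
    using pCons.IH[OF fq] pCons.prems by (simp add: power_int_add)
  also have "\<dots> = pact q (pCons a p) f * pact q p' f" unfolding p' pact_pCons by (simp add: ac_simps)
  finally show ?case .
qed

lemma pact_uminus: assumes q: "q \<noteq> 0" shows "pact q (- p) f = inverse (pact q p f)"
proof (induction p arbitrary: f rule: pCons_induct)
  case 0 then show ?case by simp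
next
  case (pCons a p)
  show ?case by (simp add: pact_pCons pCons.IH power_int_minus)
qed

lemma pact_mult_f: assumes q: "q \<noteq> 0" shows "pact q p (f * g) = pact q p f * pact q p g"
proof (induction p arbitrary: f g rule: pCons_induct)
  case 0 then show ?case by simp
next
  case (pCons a p)
  show ?case by (simp add: pact_pCons pCons.IH power_int_mult_distrib rscale_mult[OF q] ac_simps)
qed

lemma pact_inverse_f: assumes q: "q \<noteq> 0" shows "pact q p (inverse f) = inverse (pact q p f)"
proof (induction p arbitrary: f rule: pCons_induct)
  case 0 then show ?case by simp
next
  case (pCons a p)
  show ?case by (simp add: pact_pCons pCons.IH power_int_inverse rscale_inverse[OF q])
qed

lemma pact_one_f: assumes q: "q \<noteq> 0" shows "pact q p 1 = 1"
proof (induction p rule: pCons_induct)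
  case 0 then show ?case by simp
next
  case (pCons a p)
  show ?case using pCons.IH q by (simp add: pact_pCons)
qed

lemma pact_rscale: assumes q: "q \<noteq> 0" and c: "c \<noteq> 0" shows "rscale c (pact q p f) = pact q p (rscale c f)"
proof (induction p arbitrary: f rule: pCons_induct)
  case 0 then show ?case using c by simp
next
  case (pCons a p)
  have "rscale c (rscale q f) = rscale q (rscale c f)" using rscale_rscale q c by (simp add: mult.commute)
  then show ?case by (simp add: pact_pCons pCons.IH rscale_mult[OF c] rscale_powi[OF c])
qed

lemma tt_mult: "tt * p = pCons 0 p" unfolding tt_def by simp

lemma pact_tt: "pact q (tt * p) f = pact q p (rscale q f)"
  unfolding tt_mult pact_pCons by simp

lemma pact_ttpow: assumes q: "q \<noteq> 0" shows "pact q (tt ^ k * p) f = rscale (q ^ k) (pact q p f)"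
proof (induction k arbitrary: f)
  case 0 then show ?case
  proof -
    have "rscale 1 g = g" for g :: ratfun
    proof -
      obtain a b where g: "g = Fract a b" "b \<noteq> 0" by (cases g)
      then show ?thesis using rscale_Fract[of 1 b a] by (simp add: pcompose_idR[unfolded pCons_one] one_pCons)
    qed
    then show ?thesis by simp
  qed
next
  case (Suc k)
  have "pact q (tt ^ Suc k * p) f = pact q (tt ^ k * p) (rscale q f)" by (simp add: pact_tt mult.assoc)
  also have "\<dots> = rscale (q ^ k) (pact q p (rscale q f))" by (rule Suc.IH)
  also have "\<dots> = rscale (q ^ k) (rscale q (pact q p f))" using pact_rscale[OF q q] by simp
  also have "\<dots> = rscale (q ^ Suc k) (pact q p f)" using rscale_rscale[OF _ q] q by (simp add: mult.commute)
  finally show ?case .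
qed

lemma pact_1: "pact q 1 f = f"
  using pact_pCons[of q 1 0 f] by (simp add: one_pCons)

lemma nonneg_pCons: "nonneg (pCons a p) \<Longrightarrow> 0 \<le> a \<and> nonneg p"
  unfolding nonneg_def by (metis coeff_pCons_0 coeff_pCons_Suc)

lemma pact_Aplus: assumes q: "q \<noteq> 0" shows "nonneg p \<Longrightarrow> f \<in> Aplus \<Longrightarrow> pact q p f \<in> Aplus"
proof (induction p arbitrary: f rule: pCons_induct)
  case 0 then show ?case by (simp add: Aplus.one)
next
  case (pCons a p)
  have a: "0 \<le> a" and p: "nonneg p" using nonneg_pCons[OF pCons.prems(1)] by auto
  have "f powi a = f ^ nat a" using a by (simp add: power_int_nonneg_exp)
  then have 1: "f powi a \<in> Aplus" using Aplus_power pCons.prems(2) by simp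
  have 2: "pact q p (rscale q f) \<in> Aplus" using pCons.IH[OF p Aplus_rscale[OF q pCons.prems(2)]] .
  show ?case unfolding pact_pCons by (rule Aplus.mul[OF 1 2])
qed

lemma pact_Agrp: assumes q: "q \<noteq> 0" shows "f \<in> Agrp \<Longrightarrow> pact q p f \<in> Agrp"
proof (induction p arbitrary: f rule: pCons_induct)
  case 0 then show ?case by (simp add: Agrp.one)
next
  case (pCons a p)
  show ?case unfolding pact_pCons
    by (rule Agrp.mul[OF Agrp_powi[OF pCons.prems] pCons.IH[OF Agrp_rscale[OF q pCons.prems]]])
qed

lemma pact_ratA: assumes q: "q \<noteq> 0" shows "f \<in> ratA \<Longrightarrow> pact q p f \<in> ratA"
proof (induction p arbitrary: f rule: pCons_induct)
  case 0 then show ?case by (simp add: ratA_1)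
next
  case (pCons a p)
  show ?case unfolding pact_pCons
    by (rule ratA_mult[OF ratA_powi[OF pCons.prems] pCons.IH[OF ratA_rscale[OF q pCons.prems]]])
qed

lemma rscale_prod: assumes c: "c \<noteq> 0" shows "finite S \<Longrightarrow> rscale c (\<Prod>m\<in>S. f m) = (\<Prod>m\<in>S. rscale c (f m))"
  by (induction S rule: finite_induct) (use c in \<open>auto simp: rscale_mult\<close>)

lemma inv_prod: "finite S \<Longrightarrow> inverse (\<Prod>m\<in>S. f m) = (\<Prod>m\<in>S. inverse (f m :: ratfun))"
  by (induction S rule: finite_induct) (auto simp: inverse_mult_distrib)

lemma pact_nz: assumes q: "q \<noteq> 0" shows "f \<noteq> 0 \<Longrightarrow> pact q p f \<noteq> 0"
proof (induction p arbitrary: f rule: pCons_induct)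
  case 0 then show ?case by simp
next
  case (pCons a p)
  show ?case unfolding pact_pCons using pCons.IH[OF rscale_nz[OF q pCons.prems]] pCons.prems
    by (simp add: power_int_not_zero)
qed

lemma Aplus_prod: "finite S \<Longrightarrow> (\<And>m. m \<in> S \<Longrightarrow> f m \<in> Aplus) \<Longrightarrow> (\<Prod>m\<in>S. f m) \<in> Aplus"
  by (induction S rule: finite_induct) (auto intro: Aplus.intros)

lemma ratA_prod: "finite S \<Longrightarrow> (\<And>m. m \<in> S \<Longrightarrow> f m \<in> ratA) \<Longrightarrow> (\<Prod>m\<in>S. f m) \<in> ratA"
  by (induction S rule: finite_induct) (auto simp: ratA_1 ratA_mult)

locale cartq = cart +
  fixes q :: complex
  assumes q_nz: "q \<noteq> 0"
begin

abbreviation TB where "TB \<equiv> Tbraid n A d q"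
abbreviation TW where "TW \<equiv> Tword n A d q"

definition E :: "nat \<Rightarrow> nat \<Rightarrow> int poly" where "E m = (\<lambda>l. if l = m then 1 else 0)"

definition good :: "(nat \<Rightarrow> ratfun) \<Rightarrow> bool" where
  "good x \<longleftrightarrow> (\<forall>m\<in>{1..n}. x m \<noteq> 0) \<and> (\<forall>m. m \<notin> {1..n} \<longrightarrow> x m = 1)"

lemma TW_out: "k \<notin> {1..n} \<Longrightarrow> TW \<rho> x k = x k"
  by (induction \<rho>) (auto simp: Tbraid_def)

lemma pact_sum_tt: "pact q (tt ^ j * p) f = rscale (q ^ j) (pact q p f)"
  by (rule pact_ttpow[OF q_nz])

lemma Rj: assumes g: "good x"
  shows "(\<Prod>m\<in>{1..n}. pact q (tt ^ j * M m) (x m)) = rscale (q ^ j) (\<Prod>m\<in>{1..n}. pact q (M m) (x m))"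
  by (simp add: pact_sum_tt rscale_prod q_nz)

lemma prod_pact_add: assumes g: "good x"
  shows "(\<Prod>m\<in>{1..n}. pact q (P m + Q m) (x m)) = (\<Prod>m\<in>{1..n}. pact q (P m) (x m)) * (\<Prod>m\<in>{1..n}. pact q (Q m) (x m))"
proof -
  have "(\<Prod>m\<in>{1..n}. pact q (P m + Q m) (x m)) = (\<Prod>m\<in>{1..n}. pact q (P m) (x m) * pact q (Q m) (x m))"
    by (rule prod.cong[OF refl]) (use g in \<open>simp add: good_def pact_add[OF q_nz]\<close>)
  then show ?thesis by (simp add: prod.distrib)
qed

lemma Rep: assumes g: "good x" and k: "k \<in> {1..n}" and s: "set \<rho> \<subseteq> {1..n}"
  shows "TW \<rho> x k = (\<Prod>m\<in>{1..n}. pact q (Tv \<rho> (E m) k) (x m))"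
  using k s
proof (induction \<rho> arbitrary: k)
  case Nil
  have "(\<Prod>m\<in>{1..n}. pact q (Tv [] (E m) k) (x m)) = (\<Prod>m\<in>{1..n}. if k = m then x m else 1)"
    by (rule prod.cong[OF refl]) (auto simp: E_def pact_1)
  also have "\<dots> = x k" using Nil by simp
  finally show ?case by simp
next
  case (Cons a \<rho>)
  have a: "a \<in> {1..n}" and s': "set \<rho> \<subseteq> {1..n}" using Cons.prems by auto
  define M where "M l m = Tv \<rho> (E m) l" for l m
  define y where "y = TW \<rho> x"
  have yI: "y l = (\<Prod>m\<in>{1..n}. pact q (M l m) (x m))" if "l \<in> {1..n}" for l
    using Cons.IH[OF that s'] unfolding y_def M_def by simp
  have TWc: "TW (a # \<rho>) x k = TB a y k" unfolding y_def by simp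
  have Tvc: "Tv (a # \<rho>) (E m) k = (if k = a then - (tt ^ (2 * d a)) * M a m else M k m + cc k a * M a m)" for m
    using Cons.prems(1) unfolding M_def by (simp add: Tb_def)
  show ?case
  proof (cases "k = a")
    case True
    have "TW (a # \<rho>) x k = inverse (rscale (q ^ (2 * d a)) (y a))" unfolding TWc using True Cons.prems(1) by (simp add: Tbraid_def)
    also have "\<dots> = inverse (\<Prod>m\<in>{1..n}. pact q (tt ^ (2 * d a) * M a m) (x m))" using Rj[OF g] yI[OF a] by simp
    also have "\<dots> = (\<Prod>m\<in>{1..n}. inverse (pact q (tt ^ (2 * d a) * M a m) (x m)))" by (simp add: inv_prod)
    also have "\<dots> = (\<Prod>m\<in>{1..n}. pact q (- (tt ^ (2 * d a)) * M a m) (x m))"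
      by (rule prod.cong[OF refl]) (simp add: pact_uminus[OF q_nz])
    finally show ?thesis using Tvc True by simp
  next
    case False
    have base: "(\<Prod>m\<in>{1..n}. pact q (Tv (a # \<rho>) (E m) k) (x m)) = y k * (\<Prod>m\<in>{1..n}. pact q (cc k a * M a m) (x m))"
      using Tvc False prod_pact_add[OF g, of "\<lambda>m. M k m" "\<lambda>m. cc k a * M a m"] yI[OF Cons.prems(1)] by simp
    have r1: "(\<Prod>m\<in>{1..n}. pact q (tt ^ j * M a m) (x m)) = rscale (q ^ j) (y a)" for j
      using Rj[OF g] yI[OF a] by simp
    show ?thesis
    proof -
      consider "A k a = -1" | "A k a = -2" | "A k a = -3" | "A k a \<noteq> -1 \<and> A k a \<noteq> -2 \<and> A k a \<noteq> -3" by blast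
      then show ?thesis
      proof cases
        case 1
        have "TW (a # \<rho>) x k = y k * rscale (q ^ d a) (y a)" unfolding TWc using False Cons.prems(1) 1 by (simp add: Tbraid_def)
        then show ?thesis using base r1[of "d a"] 1 by (simp add: cc_def)
      next
        case 2
        have "TW (a # \<rho>) x k = y k * rscale (q ^ 3) (y a) * rscale q (y a)" unfolding TWc using False Cons.prems(1) 2 by (simp add: Tbraid_def)
        moreover have "(\<Prod>m\<in>{1..n}. pact q (cc k a * M a m) (x m)) = rscale (q ^ 3) (y a) * rscale (q ^ 1) (y a)"
          using 2 prod_pact_add[OF g, of "\<lambda>m. tt ^ 3 * M a m" "\<lambda>m. tt ^ 1 * M a m"] r1[of 3] r1[of 1]
          by (simp add: cc_def algebra_simps)
        ultimately show ?thesis using base by (simp add: mult.assoc)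
      next
        case 3
        have "TW (a # \<rho>) x k = y k * rscale (q ^ 5) (y a) * rscale (q ^ 3) (y a) * rscale q (y a)" unfolding TWc using False Cons.prems(1) 3 by (simp add: Tbraid_def)
        moreover have "(\<Prod>m\<in>{1..n}. pact q (cc k a * M a m) (x m)) = rscale (q ^ 5) (y a) * rscale (q ^ 3) (y a) * rscale (q ^ 1) (y a)"
        proof -
          have "(\<Prod>m\<in>{1..n}. pact q (cc k a * M a m) (x m)) = (\<Prod>m\<in>{1..n}. pact q ((tt ^ 5 * M a m + tt ^ 3 * M a m) + tt ^ 1 * M a m) (x m))"
            using 3 by (simp add: cc_def algebra_simps)
          also have "\<dots> = (\<Prod>m\<in>{1..n}. pact q (tt ^ 5 * M a m + tt ^ 3 * M a m) (x m)) * rscale (q ^ 1) (y a)"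
            using prod_pact_add[OF g, of "\<lambda>m. tt ^ 5 * M a m + tt ^ 3 * M a m" "\<lambda>m. tt ^ 1 * M a m"] r1[of 1] by simp
          also have "(\<Prod>m\<in>{1..n}. pact q (tt ^ 5 * M a m + tt ^ 3 * M a m) (x m)) = rscale (q ^ 5) (y a) * rscale (q ^ 3) (y a)"
            using prod_pact_add[OF g, of "\<lambda>m. tt ^ 5 * M a m" "\<lambda>m. tt ^ 3 * M a m"] r1[of 5] r1[of 3] by simp
          finally show ?thesis .
        qed
        ultimately show ?thesis using base by (simp add: mult.assoc)
      next
        case 4
        have "TW (a # \<rho>) x k = y k" unfolding TWc using False Cons.prems(1) 4 by (auto simp: Tbraid_def)
        moreover have "cc k a = 0" using 4 by (simp add: cc_def)
        ultimately show ?thesis using base by simp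
      qed
    qed
  qed
qed

lemma qpow_nz[simp]: "q ^ k \<noteq> 0" using q_nz by simp

lemma good_TW: assumes g: "good x" and s: "set \<rho> \<subseteq> {1..n}" shows "good (TW \<rho> x)"
  unfolding good_def
proof safe
  fix m assume m: "m \<in> {1..n}" and z: "TW \<rho> x m = 0"
  have "(\<Prod>l\<in>{1..n}. pact q (Tv \<rho> (E l) m) (x l)) \<noteq> 0"
    using g pact_nz[OF q_nz] unfolding good_def by (simp add: prod_zero_iff)
  then show False using Rep[OF g m s] z by simp
next
  fix m assume "m \<notin> {1..n}" then show "TW \<rho> x m = 1" using TW_out g unfolding good_def by simp
qed

definition Fa :: "nat \<Rightarrow> ratfun \<Rightarrow> (nat \<Rightarrow> ratfun)" where
  "Fa a f = (\<lambda>k. if k \<notin> {1..n} then 1 else if k = a then f * rscale (q ^ (2 * d a)) f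
     else if A k a = 0 then 1 else if A k a = -1 then inverse (rscale (q ^ d a) f)
     else if A k a = -2 then inverse (rscale (q ^ 3) f * rscale q f)
     else if A k a = -3 then inverse (rscale (q ^ 5) f * rscale (q ^ 3) f * rscale q f) else 1)"

lemma aux_inv: "u \<noteq> 0 \<Longrightarrow> u * inverse (u * X) = inverse (X :: ratfun)"
  by (simp add: inverse_mult_distrib)

lemma ratio_step: assumes g: "good y" and a: "a \<in> {1..n}" shows "tmul y (tinv (TB a y)) = Fa a (y a)"
proof
  fix k
  show "tmul y (tinv (TB a y)) k = Fa a (y a) k"
  proof (cases "k \<in> {1..n}")
    case False then show ?thesis using g unfolding good_def tmul_def tinv_def Tbraid_def Fa_def by simp
  next
    case True
    then have yk: "y k \<noteq> 0" using g unfolding good_def by simp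
    show ?thesis using True yk aux_inv[OF yk] unfolding tmul_def tinv_def Tbraid_def Fa_def
      by (simp add: mult.assoc)
  qed
qed

lemma Fa_mult: "Fa a (f * g) = tmul (Fa a f) (Fa a g)"
  unfolding Fa_def tmul_def by (auto simp: fun_eq_iff rscale_mult q_nz inverse_mult_distrib ac_simps)

lemma Fa_inv: "Fa a (inverse f) = tinv (Fa a f)"
  unfolding Fa_def tinv_def by (auto simp: fun_eq_iff rscale_inverse q_nz inverse_mult_distrib)

lemma Fa_one: "Fa a 1 = tone"
  unfolding Fa_def tone_def by (auto simp: fun_eq_iff q_nz)

lemma lin_nz: "Fract [:1, - c:] 1 \<noteq> (0 :: ratfun)"
  using Fract_eq0[of 1 "[:1, - c:]"] by simp

lemma good_omega: "a \<in> {1..n} \<Longrightarrow> good (omega a c)"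
  unfolding good_def omega_def using lin_nz by auto

lemma alpha_Fa: assumes a: "a \<in> {1..n}" shows "alpha n A d q a c = Fa a (Fract [:1, - c:] 1)"
proof -
  have "alpha n A d q a c = tmul (omega a c) (tinv (TB a (omega a c)))"
    unfolding alpha_def tmul_def by (simp add: mult.commute)
  also have "\<dots> = Fa a (omega a c a)" by (rule ratio_step[OF good_omega[OF a] a])
  finally show ?thesis by (simp add: omega_def)
qed

lemma Fa_Qplus: assumes a: "a \<in> {1..n}" shows "f \<in> Aplus \<Longrightarrow> Fa a f \<in> Qq_plus n A d q"
proof (induction rule: Aplus.induct)
  case one then show ?case by (simp add: Fa_one Qq_plus.one)
next
  case (gen c)
  have "alpha n A d q a c \<in> Qq_plus n A d q" by (rule Qq_plus.gen) (use a gen in auto)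
  then show ?case using alpha_Fa[OF a, of c] by simp
next
  case (mul f g) then show ?case by (simp add: Fa_mult Qq_plus.mul)
qed

lemma Fa_Q: assumes a: "a \<in> {1..n}" shows "f \<in> Agrp \<Longrightarrow> Fa a f \<in> Qq n A d q"
proof (induction rule: Agrp.induct)
  case one then show ?case by (simp add: Fa_one Qq.one)
next
  case (gen c)
  have "alpha n A d q a c \<in> Qq n A d q" by (rule Qq.gen) (use a gen in auto)
  then show ?case using alpha_Fa[OF a, of c] by simp
next
  case (mul f g) then show ?case by (simp add: Fa_mult Qq.mul)
next
  case (inv f) then show ?case by (simp add: Fa_inv Qq.inv)
qed

lemma ratio_Cons: assumes g: "good x" and a: "a \<in> {1..n}" and s: "set \<rho> \<subseteq> {1..n}"
  shows "tmul x (tinv (TW (a # \<rho>) x)) = tmul (tmul x (tinv (TW \<rho> x))) (Fa a (TW \<rho> x a))"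
proof -
  define y where "y = TW \<rho> x"
  have gy: "good y" unfolding y_def by (rule good_TW[OF g s])
  have yk: "y k \<noteq> 0" for k using gy unfolding good_def by (cases "k \<in> {1..n}") auto
  have "tmul x (tinv (TB a y)) = tmul (tmul x (tinv y)) (tmul y (tinv (TB a y)))"
    unfolding tmul_def tinv_def using yk by (auto simp: fun_eq_iff)
  then show ?thesis using ratio_step[OF gy a] unfolding y_def by simp
qed

lemma ratio_Nil: assumes g: "good x" shows "tmul x (tinv (TW [] x)) = tone"
proof -
  have "x k \<noteq> 0" for k using g unfolding good_def by (cases "k \<in> {1..n}") auto
  then show ?thesis unfolding tmul_def tinv_def tone_def by (auto simp: fun_eq_iff)
qed

lemma Pq_plus_props: "x \<in> Pq_plus n \<Longrightarrow> (\<forall>m\<in>{1..n}. x m \<in> Aplus) \<and> (\<forall>m. m \<notin> {1..n} \<longrightarrow> x m = 1)"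
proof (induction rule: Pq_plus.induct)
  case one then show ?case by (simp add: tone_def Aplus.one)
next
  case (gen i a) then show ?case by (auto simp: omega_def intro: Aplus.intros)
next
  case (mul x y) then show ?case by (auto simp: tmul_def intro: Aplus.mul)
qed

lemma Pq_good: "x \<in> Pq n \<Longrightarrow> good x"
  unfolding Pq_def good_def using ratA_nz by auto

lemma Pq_plus_good: "x \<in> Pq_plus n \<Longrightarrow> good x"
  using Pq_plus_props ratA_nz Agrp_ratA Aplus_Agrp unfolding good_def by blast

lemma E_nonneg: "nonneg (E m k)" unfolding E_def by simp

theorem main_plus: assumes x: "x \<in> Pq_plus n" shows "red w \<Longrightarrow> tmul x (tinv (TW w x)) \<in> Qq_plus n A d q"
proof (induction w)
  case Nil then show ?case using ratio_Nil[OF Pq_plus_good[OF x]] by (simp add: Qq_plus.one)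
next
  case (Cons a \<rho>)
  have a: "a \<in> {1..n}" and s: "set \<rho> \<subseteq> {1..n}" using Cons.prems unfolding red_def by auto
  have r: "red \<rho>" using red_suffix[of "[a]" \<rho>] Cons.prems by simp
  have g: "good x" by (rule Pq_plus_good[OF x])
  have xm: "x m \<in> Aplus" if "m \<in> {1..n}" for m using Pq_plus_props[OF x] that by blast
  have "TW \<rho> x a = (\<Prod>m\<in>{1..n}. pact q (Tv \<rho> (E m) a) (x m))" by (rule Rep[OF g a s])
  also have "\<dots> \<in> Aplus"
  proof (rule Aplus_prod)
    fix m assume m: "m \<in> {1..n}"
    have "nonneg (Tv \<rho> (E m) a)" by (rule C[OF Cons.prems]) (simp add: E_nonneg)
    then show "pact q (Tv \<rho> (E m) a) (x m) \<in> Aplus" using pact_Aplus[OF q_nz] xm[OF m] by blast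
  qed simp
  finally have "Fa a (TW \<rho> x a) \<in> Qq_plus n A d q" by (rule Fa_Qplus[OF a])
  then show ?case using ratio_Cons[OF g a s] Cons.IH[OF r] Qq_plus.mul by simp
qed

theorem main_Q: assumes x: "x \<in> Pq n" shows "set w \<subseteq> {1..n} \<Longrightarrow> tmul x (tinv (TW w x)) \<in> Qq n A d q"
proof (induction w)
  case Nil then show ?case using ratio_Nil[OF Pq_good[OF x]] by (simp add: Qq.one)
next
  case (Cons a \<rho>)
  have a: "a \<in> {1..n}" and s: "set \<rho> \<subseteq> {1..n}" using Cons.prems by auto
  have g: "good x" by (rule Pq_good[OF x])
  have xm: "x m \<in> ratA" if "m \<in> {1..n}" for m using x that unfolding Pq_def by blast
  have "TW \<rho> x a = (\<Prod>m\<in>{1..n}. pact q (Tv \<rho> (E m) a) (x m))" by (rule Rep[OF g a s])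
  also have "\<dots> \<in> ratA" by (rule ratA_prod) (use pact_ratA[OF q_nz] xm in auto)
  finally have "Fa a (TW \<rho> x a) \<in> Qq n A d q" by (rule Fa_Q[OF a ratA_Agrp])
  then show ?case using ratio_Cons[OF g a s] Cons.IH[OF s] Qq.mul by simp
qed

lemma TB_tinv: "TB a (tinv y) = tinv (TB a y)"
  unfolding Tbraid_def tinv_def by (auto simp: fun_eq_iff rscale_inverse q_nz inverse_mult_distrib)

lemma TW_tinv: "TW w (tinv y) = tinv (TW w y)"
  by (induction w) (auto simp: TB_tinv)

theorem main_minus: assumes x: "x \<in> Pq_minus n" and r: "red w" shows "tmul x (tinv (TW w x)) \<in> Qq_minus n A d q"
proof -
  obtain b where b: "x = tinv b" "b \<in> Pq_plus n" using x unfolding Pq_minus_def by blast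
  have "tmul x (tinv (TW w x)) = tinv (tmul b (tinv (TW w b)))"
    unfolding b(1) TW_tinv unfolding tmul_def tinv_def by (simp add: fun_eq_iff inverse_mult_distrib)
  moreover have "tmul b (tinv (TW w b)) \<in> Qq_plus n A d q" by (rule main_plus[OF b(2) r])
  ultimately show ?thesis unfolding Qq_minus_def by blast
qed

end

theorem lemma2p7:
  fixes n :: nat and A :: "nat \<Rightarrow> nat \<Rightarrow> int" and d :: "nat \<Rightarrow> nat" and q :: complex
    and vp vp' :: "nat \<Rightarrow> ratfun" and w :: "nat list"
  assumes cartan: "simple_cartan n A d"
    and q_nz: "q \<noteq> 0"
    and q_not_root: "\<forall>m::nat. m > 0 \<longrightarrow> q ^ m \<noteq> 1"
    and hP: "vp \<in> Pq n" "vp' \<in> Pq n"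
    and hw: "reduced_word n A w"
    and hT: "vp' = Tword n A d q w vp"
  shows "tmul vp (tinv vp') \<in> Qq n A d q
       \<and> (vp \<in> Pq_plus n \<longrightarrow> tmul vp (tinv vp') \<in> Qq_plus n A d q)
       \<and> (vp \<in> Pq_minus n \<longrightarrow> tmul vp (tinv vp') \<in> Qq_minus n A d q)"
proof -
  interpret cartq n A d q by unfold_locales (use cartan q_nz in auto)
  have r: "red w" using hw reduced_word_iff by simp
  have sw: "set w \<subseteq> {1..n}" using r unfolding red_def by simp
  show ?thesis using main_Q[OF hP(1) sw] main_plus[OF _ r] main_minus[OF _ r] hT by simp
qed

end
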